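(* Let $\sharp\in\{cy,ra\}$ and assume (ER$\sharp$) and (NE). Then $\sum_{j=1}^M\mathrm{Tr}(\rho^\sharp_+\Phi^\sharp_j)=0$.
   Context: Finite-dimensional $\mathcal H_{\mathcal S},\mathcal H_{\mathcal E_j}$ ($j=1..M$), self-adjoint $H_{\mathcal S},H_{\mathcal E_j}$, self-adjoint $V_j$, $\tau_j>0$, $T=\sum\tau_j$, $U_j=e^{-i\tau_j(H_{\mathcal S}\otimes\mathrm{Id}+\mathrm{Id}\otimes H_{\mathcal E_j}+V_j)}$; $\beta_{\rm ref}>0$; for fixed $\boldsymbol\zeta\in\mathbb R^M$, $\rho_{\mathcal E_j}$ Gibbs state of $H_{\mathcal E_j}$ at $\beta_{\rm ref}-\zeta_j$; $\mathcal L_j(\rho)=\mathrm{Tr}_{\mathcal H_{\mathcal E_j}}(U_j(\rho\otimes\rho_{\mathcal E_j})U_j^* )$ with dual $\mathcal L_j^*$; $\mathcal L_{cy}=\mathcal L_M\circ\cdots\circ\mathcal L_1$, $\mathcal L_{ra}=\frac1M\sum\mathcal L_j$; $\rho^\sharp_+$ unique invariant state of $\mathcal L_\sharp$. Fluxes $\Phi_j=-\frac1T\mathrm{Tr}_{\mathcal H_{\mathcal E_j}}((\mathrm{Id}\otimes\rho_{\mathcal E_j})(U_j^*(\mathrm{Id}\otimes H_{\mathcal E_j})U_j-\mathrm{Id}\otimes H_{\mathcal E_j}))$, $\Phi^{cy}_j=\mathcal L_1^*\circ\cdots\circ\mathcal L_{j-1}^*(\Phi_j)$, $\Phi^{ra}_j=\Phi_j$.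 Primitive: for some $n$ products of $n$ Kraus operators span all operators. (ER$\sharp$): $\mathcal L_{\sharp,\boldsymbol\zeta'}$ primitive for some $\boldsymbol\zeta'$. (NE): there is $\zeta\mapsto\rho_{+,\zeta}$ (states) with $U_j(\rho_{+,\zeta}\otimes\rho_{\mathcal E_j,\zeta})U_j^*=\rho_{+,\zeta}\otimes\rho_{\mathcal E_j,\zeta}$ for all $j$ and $\zeta\in\mathbb R$, $\rho_{\mathcal E_j,\zeta}$ Gibbs at $\beta_{\rm ref}-\zeta$. *)

theory Defs
  imports "Jordan_Normal_Form.Matrix"
begin

text \<open>A Hilbert space of dimension d is identified with C^d; operators are
  complex d x d matrices. The tensor product of C^a and C^b is C^(a*b) with
  basis index (i,k) mapped to i*b+k (Kronecker convention).\<close>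

definition madj :: "complex mat \<Rightarrow> complex mat" where
  "madj A = mat (dim_col A) (dim_row A) (\<lambda>(i,j). cnj (A $$ (j,i)))"

definition mtrace :: "complex mat \<Rightarrow> complex" where
  "mtrace A = (\<Sum>i<dim_row A. A $$ (i,i))"

definition self_adjoint :: "nat \<Rightarrow> complex mat \<Rightarrow> bool" where
  "self_adjoint d A \<longleftrightarrow> A \<in> carrier_mat d d \<and> madj A = A"

definition is_state :: "nat \<Rightarrow> complex mat \<Rightarrow> bool" where
  "is_state d \<rho> \<longleftrightarrow> self_adjoint d \<rho> \<and>
     (\<forall>v \<in> carrier_vec d. 0 \<le> Re (\<Sum>i<d. cnj (v $ i) * ((\<rho> *\<^sub>v v) $ i))) \<and>
     mtrace \<rho> = 1"

definition kron :: "complex mat \<Rightarrow> complex mat \<Rightarrow> complex mat" where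
  "kron A B = mat (dim_row A * dim_row B) (dim_col A * dim_col B)
     (\<lambda>(i,j). A $$ (i div dim_row B, j div dim_col B) * B $$ (i mod dim_row B, j mod dim_col B))"

definition ptrace2 :: "nat \<Rightarrow> nat \<Rightarrow> complex mat \<Rightarrow> complex mat" where
  "ptrace2 dS dE X = mat dS dS (\<lambda>(i,k). \<Sum>b<dE. X $$ (i*dE+b, k*dE+b))"

definition mexp :: "complex mat \<Rightarrow> complex mat" where
  "mexp A = mat (dim_row A) (dim_row A) (\<lambda>(i,j). \<Sum>k. (A ^\<^sub>m k) $$ (i,j) / of_nat (fact k))"

definition gibbs :: "real \<Rightarrow> complex mat \<Rightarrow> complex mat" where
  "gibbs b H = (1 / mtrace (mexp ((- complex_of_real b) \<cdot>\<^sub>m H))) \<cdot>\<^sub>m mexp ((- complex_of_real b) \<cdot>\<^sub>m H)"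

text \<open>Reservoirs are indexed by j in 0..<M (the paper's j = 1..M).\<close>

definition Uop :: "nat \<Rightarrow> (nat \<Rightarrow> nat) \<Rightarrow> complex mat \<Rightarrow> (nat \<Rightarrow> complex mat)
    \<Rightarrow> (nat \<Rightarrow> complex mat) \<Rightarrow> (nat \<Rightarrow> real) \<Rightarrow> nat \<Rightarrow> complex mat" where
  "Uop dS dE HS HE V \<tau> j = mexp ((- \<i> * complex_of_real (\<tau> j)) \<cdot>\<^sub>m
      (kron HS (1\<^sub>m (dE j)) + kron (1\<^sub>m dS) (HE j) + V j))"

definition rhoE :: "(nat \<Rightarrow> complex mat) \<Rightarrow> real \<Rightarrow> (nat \<Rightarrow> real) \<Rightarrow> nat \<Rightarrow> complex mat" where
  "rhoE HE \<beta> \<zeta> j = gibbs (\<beta> - \<zeta> j) (HE j)"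

definition Lj :: "nat \<Rightarrow> (nat \<Rightarrow> nat) \<Rightarrow> complex mat \<Rightarrow> (nat \<Rightarrow> complex mat)
    \<Rightarrow> (nat \<Rightarrow> complex mat) \<Rightarrow> (nat \<Rightarrow> real) \<Rightarrow> real \<Rightarrow> (nat \<Rightarrow> real)
    \<Rightarrow> nat \<Rightarrow> complex mat \<Rightarrow> complex mat" where
  "Lj dS dE HS HE V \<tau> \<beta> \<zeta> j \<rho> =
     (let U = Uop dS dE HS HE V \<tau> j in
      ptrace2 dS (dE j) (U * kron \<rho> (rhoE HE \<beta> \<zeta> j) * madj U))"

text \<open>dual (Heisenberg picture) of Lj w.r.t. the pairing (rho, X) -> Tr(rho X)\<close>
definition Ljdual :: "nat \<Rightarrow> (nat \<Rightarrow> nat) \<Rightarrow> complex mat \<Rightarrow> (nat \<Rightarrow> complex mat)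
    \<Rightarrow> (nat \<Rightarrow> complex mat) \<Rightarrow> (nat \<Rightarrow> real) \<Rightarrow> real \<Rightarrow> (nat \<Rightarrow> real)
    \<Rightarrow> nat \<Rightarrow> complex mat \<Rightarrow> complex mat" where
  "Ljdual dS dE HS HE V \<tau> \<beta> \<zeta> j X =
     (let U = Uop dS dE HS HE V \<tau> j in
      ptrace2 dS (dE j) (kron (1\<^sub>m dS) (rhoE HE \<beta> \<zeta> j) * (madj U * kron X (1\<^sub>m (dE j)) * U)))"

datatype scheme = Cy | Ra

definition Lsharp :: "scheme \<Rightarrow> nat \<Rightarrow> nat \<Rightarrow> (nat \<Rightarrow> nat) \<Rightarrow> complex mat \<Rightarrow> (nat \<Rightarrow> complex mat)
    \<Rightarrow> (nat \<Rightarrow> complex mat) \<Rightarrow> (nat \<Rightarrow> real) \<Rightarrow> real \<Rightarrow> (nat \<Rightarrow> real)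
    \<Rightarrow> complex mat \<Rightarrow> complex mat" where
  "Lsharp s M dS dE HS HE V \<tau> \<beta> \<zeta> \<rho> =
     (case s of
        Cy \<Rightarrow> fold (\<lambda>j r. Lj dS dE HS HE V \<tau> \<beta> \<zeta> j r) [0..<M] \<rho>
      | Ra \<Rightarrow> (1 / of_nat M) \<cdot>\<^sub>m
               foldr (\<lambda>j A. Lj dS dE HS HE V \<tau> \<beta> \<zeta> j \<rho> + A) [0..<M] (0\<^sub>m dS dS))"

definition Phi :: "nat \<Rightarrow> nat \<Rightarrow> (nat \<Rightarrow> nat) \<Rightarrow> complex mat \<Rightarrow> (nat \<Rightarrow> complex mat)
    \<Rightarrow> (nat \<Rightarrow> complex mat) \<Rightarrow> (nat \<Rightarrow> real) \<Rightarrow> real \<Rightarrow> (nat \<Rightarrow> real)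
    \<Rightarrow> nat \<Rightarrow> complex mat" where
  "Phi M dS dE HS HE V \<tau> \<beta> \<zeta> j =
     (let U = Uop dS dE HS HE V \<tau> j; T = (\<Sum>k<M. \<tau> k);
          HEt = kron (1\<^sub>m dS) (HE j) in
      (- 1 / complex_of_real T) \<cdot>\<^sub>m
        ptrace2 dS (dE j) (kron (1\<^sub>m dS) (rhoE HE \<beta> \<zeta> j) * (madj U * HEt * U - HEt)))"

definition Phisharp :: "scheme \<Rightarrow> nat \<Rightarrow> nat \<Rightarrow> (nat \<Rightarrow> nat) \<Rightarrow> complex mat \<Rightarrow> (nat \<Rightarrow> complex mat)
    \<Rightarrow> (nat \<Rightarrow> complex mat) \<Rightarrow> (nat \<Rightarrow> real) \<Rightarrow> real \<Rightarrow> (nat \<Rightarrow> real)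
    \<Rightarrow> nat \<Rightarrow> complex mat" where
  "Phisharp s M dS dE HS HE V \<tau> \<beta> \<zeta> j =
     (case s of
        Cy \<Rightarrow> foldr (\<lambda>k X. Ljdual dS dE HS HE V \<tau> \<beta> \<zeta> k X) [0..<j] (Phi M dS dE HS HE V \<tau> \<beta> \<zeta> j)
      | Ra \<Rightarrow> Phi M dS dE HS HE V \<tau> \<beta> \<zeta> j)"

definition in_span :: "nat \<Rightarrow> complex mat set \<Rightarrow> complex mat \<Rightarrow> bool" where
  "in_span d S X \<longleftrightarrow> (\<exists>cs :: (complex \<times> complex mat) list.
      set (map snd cs) \<subseteq> S \<and> X = foldr (\<lambda>(c,A) B. c \<cdot>\<^sub>m A + B) cs (0\<^sub>m d d))"

definition kraus_rep :: "nat \<Rightarrow> (complex mat \<Rightarrow> complex mat) \<Rightarrow> complex mat list \<Rightarrow> bool" where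
  "kraus_rep d L Ks \<longleftrightarrow> set Ks \<subseteq> carrier_mat d d \<and>
     (\<forall>\<rho> \<in> carrier_mat d d. L \<rho> = foldr (\<lambda>K B. K * \<rho> * madj K + B) Ks (0\<^sub>m d d))"

text \<open>primitive: for some n, products of n Kraus operators span all operators
  (this property does not depend on the chosen Kraus representation)\<close>
definition primitive :: "nat \<Rightarrow> (complex mat \<Rightarrow> complex mat) \<Rightarrow> bool" where
  "primitive d L \<longleftrightarrow> (\<exists>Ks. kraus_rep d L Ks \<and> (\<exists>n.
     \<forall>X \<in> carrier_mat d d. in_span d {foldr (\<lambda>A B. A * B) ws (1\<^sub>m d) | ws. length ws = n \<and> set ws \<subseteq> set Ks} X))"

end

theory Submission
  imports Defs "Jordan_Normal_Form.Schur_Decomposition" "HOL-Computational_Algebra.Fundamental_Theorem_Algebra"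
begin


declare index_mult_mat(1)[simp del]

lemma mult_idx[simp]:
  assumes "i < dim_row A" "j < dim_col B" "dim_col A = dim_row B"
  shows "(A * B) $$ (i,j) = (\<Sum>k<dim_col A. A $$ (i,k) * B $$ (k,j))"
  using assms by (simp add: index_mult_mat(1) scalar_prod_def atLeast0LessThan)

lemma madj_dims[simp]: "dim_row (madj A) = dim_col A" "dim_col (madj A) = dim_row A"
  by (auto simp: madj_def)

lemma madj_idx[simp]: "i < dim_col A \<Longrightarrow> j < dim_row A \<Longrightarrow> madj A $$ (i,j) = cnj (A $$ (j,i))"
  by (auto simp: madj_def)

lemma madj_carrier[simp]: "A \<in> carrier_mat n m \<Longrightarrow> madj A \<in> carrier_mat m n"
  unfolding carrier_mat_def by simp

lemma madj_madj[simp]: "madj (madj A) = A"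
  by (rule eq_matI) (auto simp: madj_def)

lemma madj_mult: assumes "A \<in> carrier_mat n k" "B \<in> carrier_mat k m"
  shows "madj (A * B) = madj B * madj A"
  using assms by (intro eq_matI) (auto simp: mult.commute)

lemma madj_add: assumes "A \<in> carrier_mat n m" "B \<in> carrier_mat n m"
  shows "madj (A + B) = madj A + madj B"
  using assms by (intro eq_matI) auto

lemma madj_minus: assumes "A \<in> carrier_mat n m" "B \<in> carrier_mat n m"
  shows "madj (A - B) = madj A - madj B"
  using assms by (intro eq_matI) auto

lemma madj_smult: "madj (c \<cdot>\<^sub>m A) = cnj c \<cdot>\<^sub>m madj A"
  by (intro eq_matI) auto

lemma madj_one[simp]: "madj (1\<^sub>m n) = 1\<^sub>m n"
  by (intro eq_matI) auto

lemma madj_zero[simp]: "madj (0\<^sub>m n m) = 0\<^sub>m m n"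
  by (intro eq_matI) auto

lemma cancel_l: fixes A :: "complex mat" assumes "A \<in> carrier_mat n m" "B \<in> carrier_mat m n" "C \<in> carrier_mat n k" "A * B = 1\<^sub>m n"
  shows "A * (B * C) = C"
proof -
  have "A * (B * C) = (A * B) * C" by (rule assoc_mult_mat[symmetric]; fact)
  also have "\<dots> = 1\<^sub>m n * C" using assms(4) by (simp only:)
  also have "\<dots> = C" using assms(3) by (rule left_mult_one_mat)
  finally show ?thesis .
qed

definition unitary :: "nat \<Rightarrow> complex mat \<Rightarrow> bool" where
  "unitary n U \<longleftrightarrow> U \<in> carrier_mat n n \<and> madj U * U = 1\<^sub>m n \<and> U * madj U = 1\<^sub>m n"

definition dmat :: "nat \<Rightarrow> (nat \<Rightarrow> complex) \<Rightarrow> complex mat" where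
  "dmat n d = mat n n (\<lambda>(i,j). if i = j then d i else 0)"

lemma dmat_carrier[simp]: "dmat n d \<in> carrier_mat n n" 
  and dmat_dims[simp]: "dim_row (dmat n d) = n" "dim_col (dmat n d) = n"
  by (auto simp: dmat_def)

lemma dmat_idx[simp]: "i < n \<Longrightarrow> j < n \<Longrightarrow> dmat n d $$ (i,j) = (if i = j then d i else 0)"
  by (auto simp: dmat_def)

lemma udv_idx:
  assumes U: "U \<in> carrier_mat n n" and V: "V \<in> carrier_mat n n" and i: "i < n" and j: "j < n"
  shows "(U * dmat n d * madj V) $$ (i,j) = (\<Sum>k<n. U $$ (i,k) * d k * cnj (V $$ (j,k)))"
proof -
  have "(U * dmat n d * madj V) $$ (i,j) = (\<Sum>k<n. (U * dmat n d) $$ (i,k) * cnj (V $$ (j,k)))"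
    using U V i j by simp
  also have "\<dots> = (\<Sum>k<n. U $$ (i,k) * d k * cnj (V $$ (j,k)))"
  proof (rule sum.cong[OF refl])
    fix k assume k: "k \<in> {..<n}"
    have "(U * dmat n d) $$ (i,k) = (\<Sum>l<n. U $$ (i,l) * (if l = k then d l else 0))"
      using U i k by simp
    also have "\<dots> = U $$ (i,k) * d k" using k
      by (simp add: if_distrib[where f="\<lambda>x. _ * x"] sum.delta cong: if_cong)
    finally show "(U * dmat n d) $$ (i,k) * cnj (V $$ (j,k)) = U $$ (i,k) * d k * cnj (V $$ (j,k))" by simp
  qed
  finally show ?thesis .
qed

lemma unitary_mult: assumes "unitary n U" "unitary n V" shows "unitary n (U * V)"
proof -
  have c: "U \<in> carrier_mat n n" "V \<in> carrier_mat n n" using assms unfolding unitary_def by auto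
  have u: "madj U * U = 1\<^sub>m n" "U * madj U = 1\<^sub>m n" "madj V * V = 1\<^sub>m n" "V * madj V = 1\<^sub>m n"
    using assms unfolding unitary_def by auto
  have "madj (U * V) * (U * V) = madj V * (madj U * (U * V))"
    using c by (simp add: madj_mult[OF c(1) c(2)] assoc_mult_mat[of "madj V" n n "madj U" n "U*V" n])
  also have "madj U * (U * V) = V" using c u by (intro cancel_l[of _ n n]) auto
  finally have 1: "madj (U * V) * (U * V) = 1\<^sub>m n" using u by simp
  have "(U * V) * madj (U * V) = (U * V) * (madj V * madj U)"
    by (simp add: madj_mult[OF c(1) c(2)])
  also have "\<dots> = U * (V * (madj V * madj U))"
    using c by (intro assoc_mult_mat[of _ n n _ n _ n]) auto
  also have "V * (madj V * madj U) = madj U" using c u by (intro cancel_l[of _ n n]) auto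
  finally have "(U * V) * madj (U * V) = U * madj U" .
  then show ?thesis using 1 c u unfolding unitary_def by auto
qed



lemma cscalar_self: "v \<bullet>c v = complex_of_real (\<Sum>k<dim_vec v. (cmod (v $ k))^2)"
proof -
  have "v \<bullet>c v = (\<Sum>i<dim_vec v. v$i * cnj(v$i))" by (simp add: scalar_prod_def atLeast0LessThan)
  also have "\<dots> = (\<Sum>i<dim_vec v. complex_of_real ((cmod (v$i))^2))" by (simp only: complex_norm_square)
  also have "\<dots> = complex_of_real (\<Sum>k<dim_vec v. (cmod (v $ k))^2)" by (simp only: of_real_sum)
  finally show ?thesis .
qed

lemma vec_nonzero_norm_pos:
  assumes "v \<in> carrier_vec n" "v \<noteq> 0\<^sub>v n"
  shows "(\<Sum>k<n. (cmod (v $ k))^2) > 0"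
proof -
  obtain k where k: "k < n" "v $ k \<noteq> 0" using assms by (metis eq_vecI carrier_vecD index_zero_vec(1,2))
  have "(cmod (v $ k))^2 \<le> (\<Sum>k<n. (cmod (v $ k))^2)"
    using k by (intro member_le_sum) auto
  moreover have "(cmod (v $ k))^2 > 0" using k by simp
  ultimately show ?thesis by linarith
qed

lemma spectral:
  assumes "self_adjoint n A"
  shows "\<exists>U l. unitary n U \<and> A = U * dmat n (\<lambda>i. complex_of_real (l i)) * madj U"
  using assms
proof (induction n arbitrary: A)
  case 0
  then have A: "A \<in> carrier_mat 0 0" by (simp add: self_adjoint_def)
  show ?case
    apply (rule exI[of _ "1\<^sub>m 0"], rule exI[of _ "\<lambda>_. 0"])
    using A by (auto simp: unitary_def intro!: eq_matI)
next
  case (Suc m)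
  define n where "n = Suc m"
  have A: "A \<in> carrier_mat n n" and hA: "madj A = A" using Suc.prems by (auto simp: self_adjoint_def n_def)
  have "degree (char_poly A) = n" using degree_monic_char_poly[OF A] by simp
  then have "\<not> constant (poly (char_poly A))" by (simp add: constant_degree n_def)
  then obtain e where "poly (char_poly A) e = 0" using fundamental_theorem_of_algebra by blast
  then have "eigenvalue A e" using eigenvalue_root_char_poly[OF A] by simp
  define v where "v = find_eigenvector A e"
  have ev: "eigenvector A v e" unfolding v_def by (rule find_eigenvector[OF A]) fact
  then have v: "v \<in> carrier_vec n" "v \<noteq> 0\<^sub>v n" "A *\<^sub>v v = e \<cdot>\<^sub>v v"
    using A unfolding eigenvector_def by auto
  define c where "c = (\<Sum>k<n. (cmod (v $ k))^2)"
  have c: "c > 0" unfolding c_def by (rule vec_nonzero_norm_pos[OF v(1,2)])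
  define u where "u = complex_of_real (1 / sqrt c) \<cdot>\<^sub>v v"
  have u: "u \<in> carrier_vec n" using v unfolding u_def by simp
  have u0: "u \<noteq> 0\<^sub>v n"
  proof
    assume u0: "u = 0\<^sub>v n"
    have "v = 0\<^sub>v n"
    proof (rule eq_vecI)
      fix i assume "i < dim_vec (0\<^sub>v n)"
      then have i: "i < n" by simp
      have "u $ i = 0" using u0 i by simp
      then show "v $ i = 0\<^sub>v n $ i" using i v c unfolding u_def by simp
    qed (use v in auto)
    then show False using v by simp
  qed
  have Au: "A *\<^sub>v u = e \<cdot>\<^sub>v u" unfolding u_def using A v
    by (simp add: mult_mat_vec smult_smult_assoc mult.commute)
  have uu: "u \<bullet>c u = 1"
  proof -
    have "u \<bullet>c u = complex_of_real (\<Sum>k<n. (cmod (u $ k))^2)" using u by (simp add: cscalar_self)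
    also have "(\<Sum>k<n. (cmod (u $ k))^2) = (\<Sum>k<n. (cmod (v $ k))^2 / c)"
      using v c unfolding u_def by (intro sum.cong) (auto simp: norm_mult norm_divide power_mult_distrib power_divide less_imp_le[OF c])
    also have "\<dots> = 1" using c by (simp add: sum_divide_distrib[symmetric] c_def[symmetric])
    finally show ?thesis by simp
  qed
  interpret cof_vec_space n "TYPE(complex)" .
  define bs where "bs = basis_completion u"
  note bc = basis_completion[OF u u0, folded bs_def]
  define ws where "ws = gram_schmidt n bs"
  note gs = gram_schmidt_result[OF bc(2) bc(4) bc(5) ws_def]
  have lws: "length ws = n" using gs bc by simp
  obtain bs' where bs': "bs = u # bs'" unfolding bs_def basis_completion_def Let_def by simp
  have hws: "ws ! 0 = u" unfolding ws_def bs' using gram_schmidt_hd[OF u, of bs'] lws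
    by (metis bs' hd_conv_nth length_0_conv n_def nat.distinct(1) ws_def)
  have wsc: "\<And>i. i < n \<Longrightarrow> ws ! i \<in> carrier_vec n" using gs lws by auto
  have wsnz: "\<And>i. i < n \<Longrightarrow> ws ! i \<bullet>c ws ! i \<noteq> 0" using gs lws by (auto simp: corthogonal_def)
  have wsorth: "\<And>i j. i < n \<Longrightarrow> j < n \<Longrightarrow> i \<noteq> j \<Longrightarrow> ws ! i \<bullet>c ws ! j = 0" using gs lws by (auto simp: corthogonal_def)
  define nr where "nr i = 1 / sqrt (\<Sum>k<n. (cmod (ws ! i $ k))^2)" for i
  have nrpos: "\<And>i. i < n \<Longrightarrow> (\<Sum>k<n. (cmod (ws ! i $ k))^2) > 0"
  proof -
    fix i assume i: "i < n"
    have "ws ! i \<noteq> 0\<^sub>v n" using wsnz[OF i] wsc[OF i] by auto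
    then show "(\<Sum>k<n. (cmod (ws ! i $ k))^2) > 0" using wsc[OF i] by (intro vec_nonzero_norm_pos) auto
  qed
  have nr0: "nr 0 = 1"
  proof -
    have "complex_of_real (\<Sum>k<n. (cmod (u $ k))^2) = 1" using uu u by (metis carrier_vecD cscalar_self)
    then have "(\<Sum>k<n. (cmod (u $ k))^2) = 1" by (simp only: of_real_eq_1_iff)
    then show ?thesis using hws unfolding nr_def by simp
  qed
  define W where "W = mat n n (\<lambda>(k,j). complex_of_real (nr j) * (ws ! j $ k))"
  have W: "W \<in> carrier_mat n n" unfolding W_def by simp
  have Wa: "madj W \<in> carrier_mat n n" using W by simp
  have WW: "madj W * W = 1\<^sub>m n"
  proof (rule eq_matI)
    fix i j assume i: "i < dim_row (1\<^sub>m n)" and j: "j < dim_col (1\<^sub>m n)"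
    then have i: "i < n" and j: "j < n" by auto
    have "(madj W * W) $$ (i,j) = (\<Sum>k<n. cnj (W $$ (k,i)) * W $$ (k,j))" using W i j by simp
    also have "\<dots> = complex_of_real (nr i * nr j) * (ws ! j \<bullet>c ws ! i)"
      using i j wsc[OF i] wsc[OF j] unfolding W_def
      by (simp add: scalar_prod_def atLeast0LessThan sum_distrib_left mult_ac)
    also have "\<dots> = 1\<^sub>m n $$ (i,j)"
    proof (cases "i = j")
      case True
      define S where "S = (\<Sum>k<n. (cmod (ws ! i $ k))^2)"
      have S: "S > 0" using nrpos[OF i] S_def by simp
      have wi: "ws ! i \<bullet>c ws ! i = complex_of_real S" using wsc[OF i] cscalar_self S_def by (metis carrier_vecD)
      have sq: "sqrt S * sqrt S = S" using S by simp
      have r: "nr i * nr i * S = 1" unfolding nr_def S_def[symmetric] using S sq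
        by (simp add: field_simps)
      have "complex_of_real (nr i * nr j) * (ws ! j \<bullet>c ws ! i) = complex_of_real (nr i * nr i * S)"
        using True wi by simp
      also have "\<dots> = 1" using r by simp
      finally show ?thesis using True i by simp
    next
      case False
      then show ?thesis using wsorth[OF j i] i j by simp
    qed
    finally show "(madj W * W) $$ (i,j) = 1\<^sub>m n $$ (i,j)" .
  qed (use W in auto)
  have WW': "W * madj W = 1\<^sub>m n"
    by (rule mat_mult_left_right_inverse[OF madj_carrier[OF W] W WW])
  have uW: "unitary n W" using W WW WW' unfolding unitary_def by auto
  have Wcol0: "\<And>k. k < n \<Longrightarrow> W $$ (k,0) = u $ k"
    unfolding W_def using nr0 hws by (simp add: n_def)
  define A' where "A' = madj W * (A * W)"
  have A': "A' \<in> carrier_mat n n" unfolding A'_def using A W Wa by (metis mult_carrier_mat)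
  have hA': "madj A' = A'"
    unfolding A'_def using A W hA by (simp add: madj_mult[of _ n n _ n] assoc_mult_mat[of _ n n _ n _ n])
  have A'sym: "\<And>i j. i < n \<Longrightarrow> j < n \<Longrightarrow> A' $$ (j,i) = cnj (A' $$ (i,j))"
  proof -
    fix i j assume "i < n" "j < n"
    then have "madj A' $$ (j,i) = cnj (A' $$ (i,j))" using A' by simp
    then show "A' $$ (j,i) = cnj (A' $$ (i,j))" using hA' by simp
  qed
  have AW0: "\<And>k. k < n \<Longrightarrow> (A * W) $$ (k,0) = e * W $$ (k,0)"
  proof -
    fix k assume k: "k < n"
    have "(A * W) $$ (k,0) = (\<Sum>l<n. A $$ (k,l) * u $ l)" using A W k Wcol0 by (simp add: n_def)
    also have "\<dots> = (A *\<^sub>v u) $ k" using A u k by (simp add: scalar_prod_def atLeast0LessThan)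
    also have "\<dots> = e * W $$ (k,0)" using Au k u Wcol0 by simp
    finally show "(A * W) $$ (k,0) = e * W $$ (k,0)" .
  qed
  have A'col: "\<And>i. i < n \<Longrightarrow> A' $$ (i,0) = (if i = 0 then e else 0)"
  proof -
    fix i assume i: "i < n"
    have "A' $$ (i,0) = (\<Sum>k<n. cnj (W $$ (k,i)) * (A * W) $$ (k,0))"
      unfolding A'_def using A W i by (simp add: n_def)
    also have "\<dots> = e * (\<Sum>k<n. cnj (W $$ (k,i)) * W $$ (k,0))"
      using AW0 by (simp add: sum_distrib_left mult_ac)
    also have "(\<Sum>k<n. cnj (W $$ (k,i)) * W $$ (k,0)) = (madj W * W) $$ (i,0)"
      using W i by (simp add: n_def)
    finally show "A' $$ (i,0) = (if i = 0 then e else 0)" using WW i by (simp add: n_def)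
  qed
  have ereal: "e = complex_of_real (Re e)"
  proof -
    have "A' $$ (0,0) = cnj (A' $$ (0,0))" using A'sym[of 0 0] by (simp add: n_def)
    then have "cnj e = e" using A'col[of 0] by (simp add: n_def)
    then have "Im (cnj e) = Im e" by simp
    then have "Im e = 0" by simp
    then show ?thesis by (simp add: complex_eq_iff)
  qed
  have A'row: "\<And>j. j < n \<Longrightarrow> A' $$ (0,j) = (if j = 0 then e else 0)"
    using A'sym A'col ereal by (metis complex_cnj_complex_of_real complex_cnj_zero n_def zero_less_Suc)
  define A3 where "A3 = mat m m (\<lambda>(i,j). A' $$ (Suc i, Suc j))"
  have "self_adjoint m A3" unfolding self_adjoint_def A3_def
    by (auto intro!: eq_matI simp: A'sym[symmetric] n_def)
  from Suc.IH[OF this] obtain U3 l3 where U3: "unitary m U3"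
    and A3: "A3 = U3 * dmat m (\<lambda>i. complex_of_real (l3 i)) * madj U3" by blast
  have U3c: "U3 \<in> carrier_mat m m" using U3 unfolding unitary_def by auto
  have U3o: "\<And>i j. i < m \<Longrightarrow> j < m \<Longrightarrow> (\<Sum>k<m. cnj (U3 $$ (k,i)) * U3 $$ (k,j)) = (if i = j then 1 else 0)"
  proof -
    fix i j assume "i < m" "j < m"
    then have "(madj U3 * U3) $$ (i,j) = (\<Sum>k<m. cnj (U3 $$ (k,i)) * U3 $$ (k,j))" using U3c by simp
    then show "(\<Sum>k<m. cnj (U3 $$ (k,i)) * U3 $$ (k,j)) = (if i = j then 1 else 0)"
      using U3 \<open>i < m\<close> \<open>j < m\<close> unfolding unitary_def by simp
  qed
  have U3o': "\<And>i j. i < m \<Longrightarrow> j < m \<Longrightarrow> (\<Sum>k<m. U3 $$ (i,k) * cnj (U3 $$ (j,k))) = (if i = j then 1 else 0)"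
  proof -
    fix i j assume "i < m" "j < m"
    then have "(U3 * madj U3) $$ (i,j) = (\<Sum>k<m. U3 $$ (i,k) * cnj (U3 $$ (j,k)))" using U3c by simp
    then show "(\<Sum>k<m. U3 $$ (i,k) * cnj (U3 $$ (j,k))) = (if i = j then 1 else 0)"
      using U3 \<open>i < m\<close> \<open>j < m\<close> unfolding unitary_def by simp
  qed
  define U' where "U' = mat n n (\<lambda>(i,j). if i = 0 \<and> j = 0 then 1 else if i = 0 \<or> j = 0 then 0 else U3 $$ (i - 1, j - 1))"
  have U': "U' \<in> carrier_mat n n" unfolding U'_def by simp
  have U'U': "madj U' * U' = 1\<^sub>m n"
  proof (rule eq_matI)
    fix i j assume "i < dim_row (1\<^sub>m n)" "j < dim_col (1\<^sub>m n)"
    then have i: "i < n" and j: "j < n" by auto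
    have "(madj U' * U') $$ (i,j) = (\<Sum>k<Suc m. cnj (U' $$ (k,i)) * U' $$ (k,j))" using U' i j by (simp add: n_def)
    also have "\<dots> = cnj (U' $$ (0,i)) * U' $$ (0,j) + (\<Sum>k<m. cnj (U' $$ (Suc k,i)) * U' $$ (Suc k,j))"
      by (rule sum.lessThan_Suc_shift)
    also have "\<dots> = 1\<^sub>m n $$ (i,j)"
    proof (cases i)
      case 0 then show ?thesis using i j unfolding U'_def by (simp add: n_def)
    next
      case (Suc i') note si = this
      show ?thesis
      proof (cases j)
        case 0 then show ?thesis using i j si unfolding U'_def by (simp add: n_def)
      next
        case (Suc j')
        then show ?thesis using i j si U3o[of i' j'] unfolding U'_def by (simp add: n_def)
      qed
    qed
    finally show "(madj U' * U') $$ (i,j) = 1\<^sub>m n $$ (i,j)" .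
  qed (use U' in auto)
  have U'U'': "U' * madj U' = 1\<^sub>m n"
    by (rule mat_mult_left_right_inverse[OF madj_carrier[OF U'] U' U'U'])
  have uU': "unitary n U'" using U' U'U' U'U'' unfolding unitary_def by auto
  define l where "l i = (if i = 0 then Re e else l3 (i - 1))" for i
  have A'eq: "A' = U' * dmat n (\<lambda>i. complex_of_real (l i)) * madj U'"
  proof (rule eq_matI)
    fix i j assume "i < dim_row (U' * dmat n (\<lambda>i. complex_of_real (l i)) * madj U')"
      "j < dim_col (U' * dmat n (\<lambda>i. complex_of_real (l i)) * madj U')"
    then have i: "i < n" and j: "j < n" using U' by auto
    have "(U' * dmat n (\<lambda>i. complex_of_real (l i)) * madj U') $$ (i,j)
       = (\<Sum>k<Suc m. U' $$ (i,k) * complex_of_real (l k) * cnj (U' $$ (j,k)))"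
      using udv_idx[OF U' U' i j] by (simp add: n_def)
    also have "\<dots> = U' $$ (i,0) * complex_of_real (l 0) * cnj (U' $$ (j,0))
       + (\<Sum>k<m. U' $$ (i,Suc k) * complex_of_real (l (Suc k)) * cnj (U' $$ (j,Suc k)))"
      by (rule sum.lessThan_Suc_shift)
    also have "\<dots> = A' $$ (i,j)"
    proof (cases i)
      case 0 then show ?thesis using i j A'row[OF j] ereal unfolding U'_def l_def by (simp add: n_def)
    next
      case (Suc i') note si = this
      show ?thesis
      proof (cases j)
        case 0 then show ?thesis using i j si A'col[OF i] unfolding U'_def l_def by (simp add: n_def)
      next
        case (Suc j')
        have "A' $$ (i,j) = A3 $$ (i',j')" using si Suc i j unfolding A3_def by (simp add: n_def)
        also have "\<dots> = (\<Sum>k<m. U3 $$ (i',k) * complex_of_real (l3 k) * cnj (U3 $$ (j',k)))"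
          unfolding A3 using udv_idx[OF U3c U3c] si Suc i j by (simp add: n_def)
        finally show ?thesis using i j si Suc unfolding U'_def l_def by (simp add: n_def)
      qed
    qed
    finally show "A' $$ (i,j) = (U' * dmat n (\<lambda>i. complex_of_real (l i)) * madj U') $$ (i,j)" by simp
  qed (use U' A' in auto)
  define D where "D = dmat n (\<lambda>i. complex_of_real (l i))"
  have D: "D \<in> carrier_mat n n" unfolding D_def by simp
  have U'a: "madj U' \<in> carrier_mat n n" using U' by simp
  have WA': "W * A' = A * W" unfolding A'_def by (rule cancel_l[OF W Wa _ WW', of _ n]) (use A W in simp)
  have "A = A * (W * madj W)" using WW' A by simp
  also have "\<dots> = (A * W) * madj W" by (rule assoc_mult_mat[OF A W Wa, symmetric])
  also have "\<dots> = (W * A') * madj W" using WA' by simp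
  also have "\<dots> = (W * U') * D * madj (W * U')" unfolding A'eq D_def[symmetric]
    using W U' D Wa U'a mult_carrier_mat[OF U'a Wa] mult_carrier_mat[OF U' D] mult_carrier_mat[OF W U']
    by (simp add: madj_mult[OF W U'] assoc_mult_mat[of _ n n _ n _ n])
  finally have "A = (W * U') * D * madj (W * U')" .
  moreover have "unitary n (W * U')" by (rule unitary_mult[OF uW uU'])
  ultimately show ?case unfolding D_def n_def by blast
qed



lemma mult_carrier_sq[simp]: "A \<in> carrier_mat n n \<Longrightarrow> B \<in> carrier_mat n n \<Longrightarrow> A * B \<in> carrier_mat n n"
  by (rule mult_carrier_mat)

lemma dmat_mult: "dmat n a * dmat n b = dmat n (\<lambda>i. a i * b i)"
proof (rule eq_matI)
  fix i j assume "i < dim_row (dmat n (\<lambda>i. a i * b i))" "j < dim_col (dmat n (\<lambda>i. a i * b i))"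
  then have i: "i < n" and j: "j < n" by auto
  have "(dmat n a * dmat n b) $$ (i,j) = (\<Sum>k<n. (if i = k then a i else 0) * (if k = j then b k else 0))"
    using i j by simp
  also have "\<dots> = (\<Sum>k<n. if k = i then (if i = j then a i * b i else 0) else 0)"
    by (intro sum.cong) auto
  also have "\<dots> = dmat n (\<lambda>i. a i * b i) $$ (i,j)" using i j by simp
  finally show "(dmat n a * dmat n b) $$ (i,j) = dmat n (\<lambda>i. a i * b i) $$ (i,j)" .
qed auto

lemma dmat_one: "dmat n (\<lambda>_. 1) = 1\<^sub>m n"
  by (intro eq_matI) auto

lemma smult_dmat: "c \<cdot>\<^sub>m dmat n a = dmat n (\<lambda>i. c * a i)"
  by (intro eq_matI) auto

lemma madj_dmat: "madj (dmat n a) = dmat n (\<lambda>i. cnj (a i))"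
  by (intro eq_matI) auto

lemma unitaryD: assumes "unitary n V"
  shows "V \<in> carrier_mat n n" "madj V \<in> carrier_mat n n" "madj V * V = 1\<^sub>m n" "V * madj V = 1\<^sub>m n"
  using assms unfolding unitary_def by auto

lemma udv_carrier[simp]: "V \<in> carrier_mat n n \<Longrightarrow> V * dmat n a * madj V \<in> carrier_mat n n"
proof -
  assume V: "V \<in> carrier_mat n n"
  then have "madj V \<in> carrier_mat n n" by simp
  then show ?thesis using V by (metis dmat_carrier mult_carrier_mat)
qed

lemma udv_mult: assumes "unitary n V"
  shows "(V * dmat n a * madj V) * (V * dmat n b * madj V) = V * dmat n (\<lambda>i. a i * b i) * madj V"
proof -
  note u = unitaryD[OF assms]
  have da: "dmat n a \<in> carrier_mat n n" and db: "dmat n b \<in> carrier_mat n n" by auto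
  have 1: "V * dmat n a \<in> carrier_mat n n" "dmat n b * madj V \<in> carrier_mat n n"
    "V * (dmat n b * madj V) \<in> carrier_mat n n"
    using u da db by (metis mult_carrier_mat)+
  have "(V * dmat n a * madj V) * (V * dmat n b * madj V) = V * (dmat n a * (madj V * (V * (dmat n b * madj V))))"
    using u da db 1 by (simp add: assoc_mult_mat[of _ n n _ n _ n])
  also have "madj V * (V * (dmat n b * madj V)) = dmat n b * madj V"
    by (rule cancel_l[OF u(2) u(1) 1(2) u(3)])
  also have "V * (dmat n a * (dmat n b * madj V)) = V * (dmat n a * dmat n b) * madj V"
    using u da db by (simp add: assoc_mult_mat[of _ n n _ n _ n])
  finally show ?thesis by (simp add: dmat_mult)
qed

lemma udv_madj: assumes "V \<in> carrier_mat n n"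
  shows "madj (V * dmat n a * madj V) = V * dmat n (\<lambda>i. cnj (a i)) * madj V"
proof -
  have "madj V \<in> carrier_mat n n" "V * dmat n a \<in> carrier_mat n n" using assms by (auto intro: mult_carrier_mat)
  then show ?thesis using assms
    by (simp add: madj_mult[of _ n n _ n] madj_dmat assoc_mult_mat[of _ n n _ n _ n])
qed

lemma udv_smult: assumes "V \<in> carrier_mat n n"
  shows "c \<cdot>\<^sub>m (V * dmat n a * madj V) = V * dmat n (\<lambda>i. c * a i) * madj V"
proof -
  have "madj V \<in> carrier_mat n n" using assms by simp
  then show ?thesis using assms
    by (simp add: mult_smult_distrib[of _ n n _ n] mult_smult_assoc_mat[of _ n n _ n] smult_dmat[symmetric])
qed

lemma udv_one: assumes "unitary n V" shows "V * dmat n (\<lambda>_. 1) * madj V = 1\<^sub>m n"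
  using unitaryD[OF assms] by (simp add: dmat_one)

lemma udv_pow: assumes "unitary n V"
  shows "(V * dmat n a * madj V) ^\<^sub>m k = V * dmat n (\<lambda>i. a i ^ k) * madj V"
proof (induction k)
  case 0
  have "(V * dmat n a * madj V) ^\<^sub>m 0 = 1\<^sub>m n" using unitaryD[OF assms] by simp
  then show ?case using udv_one[OF assms] by simp
next
  case (Suc k)
  then show ?case using udv_mult[OF assms, of "\<lambda>i. a i ^ k" a] by (simp add: mult.commute)
qed

lemma udv_mtrace: assumes "unitary n V"
  shows "mtrace (V * dmat n a * madj V) = (\<Sum>i<n. a i)"
proof -
  note u = unitaryD[OF assms]
  have "mtrace (V * dmat n a * madj V) = (\<Sum>i<n. \<Sum>k<n. V $$ (i,k) * a k * cnj (V $$ (i,k)))"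
    unfolding mtrace_def using u by (simp add: udv_idx del: mult_idx)
  also have "\<dots> = (\<Sum>k<n. a k * (\<Sum>i<n. cnj (V $$ (i,k)) * V $$ (i,k)))"
    by (subst sum.swap) (simp add: sum_distrib_left mult_ac)
  also have "\<dots> = (\<Sum>k<n. a k)"
  proof (rule sum.cong[OF refl])
    fix k assume k: "k \<in> {..<n}"
    have "(\<Sum>i<n. cnj (V $$ (i,k)) * V $$ (i,k)) = (madj V * V) $$ (k,k)" using u(1) k by simp
    also have "\<dots> = 1" using u k by simp
    finally show "a k * (\<Sum>i<n. cnj (V $$ (i,k)) * V $$ (i,k)) = a k" using u k by simp
  qed
  finally show ?thesis .
qed

lemma exp_sums_complex: "(\<lambda>k. (x::complex) ^ k / of_nat (fact k)) sums exp x"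
  using exp_converges[of x] by (simp add: scaleR_conv_of_real divide_inverse mult.commute)

lemma udv_mexp: assumes "unitary n V"
  shows "mexp (V * dmat n a * madj V) = V * dmat n (\<lambda>i. exp (a i)) * madj V"
proof -
  note u = unitaryD[OF assms]
  show ?thesis
  proof (rule eq_matI)
    fix i j assume "i < dim_row (V * dmat n (\<lambda>i. exp (a i)) * madj V)" "j < dim_col (V * dmat n (\<lambda>i. exp (a i)) * madj V)"
    then have i: "i < n" and j: "j < n" using u by auto
    have "(\<lambda>k. ((V * dmat n a * madj V) ^\<^sub>m k) $$ (i,j) / of_nat (fact k))
       = (\<lambda>k. \<Sum>l<n. V $$ (i,l) * cnj (V $$ (j,l)) * (a l ^ k / of_nat (fact k)))"
      using i j u by (simp add: udv_pow[OF assms] udv_idx sum_divide_distrib mult_ac del: mult_idx)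
    moreover have "(\<lambda>k. \<Sum>l<n. V $$ (i,l) * cnj (V $$ (j,l)) * (a l ^ k / of_nat (fact k)))
       sums (\<Sum>l<n. V $$ (i,l) * cnj (V $$ (j,l)) * exp (a l))"
      by (intro sums_sum sums_mult exp_sums_complex)
    ultimately have "mexp (V * dmat n a * madj V) $$ (i,j) = (\<Sum>l<n. V $$ (i,l) * cnj (V $$ (j,l)) * exp (a l))"
      unfolding mexp_def using i j u by (simp add: sums_unique[symmetric])
    also have "\<dots> = (V * dmat n (\<lambda>i. exp (a i)) * madj V) $$ (i,j)"
      using i j u by (simp add: udv_idx mult_ac del: mult_idx)
    finally show "mexp (V * dmat n a * madj V) $$ (i,j) = (V * dmat n (\<lambda>i. exp (a i)) * madj V) $$ (i,j)" .
  qed (use u in \<open>auto simp: mexp_def\<close>)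
qed



lemma sum_split_prod: fixes f :: "nat \<Rightarrow> 'a::comm_monoid_add" and a b :: nat shows "(\<Sum>p<a*b. f p) = (\<Sum>i<a. \<Sum>k<b. f (i*b+k))"
proof -
  have "(\<Sum>p<a*b. f p) = (\<Sum>i<a. \<Sum>p\<in>{i*b..<i*b+b}. f p)" using sum.nat_group[of f b a] by simp
  also have "\<dots> = (\<Sum>i<a. \<Sum>k<b. f (i*b+k))"
  proof (rule sum.cong[OF refl])
    fix i
    have "{i*b..<i*b+b} = {0 + i*b..<b + i*b}" by (simp add: add.commute)
    then have "(\<Sum>p\<in>{i*b..<i*b+b}. f p) = (\<Sum>k\<in>{0..<b}. f (k + i*b))" by (simp only: sum.shift_bounds_nat_ivl)
    then show "(\<Sum>p\<in>{i*b..<i*b+b}. f p) = (\<Sum>k<b. f (i*b+k))" by (simp add: atLeast0LessThan add.commute)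
  qed
  finally show ?thesis .
qed

lemma dm_simps[simp]: "k < (b::nat) \<Longrightarrow> (i*b+k) div b = i" "k < (b::nat) \<Longrightarrow> (i*b+k) mod b = k"
  by auto

lemma idx_lt: "k < (b::nat) \<Longrightarrow> i < a \<Longrightarrow> i*b+k < a*b"
proof -
  assume "k < b" "i < a"
  then have "i*b+k < i*b+b" by simp
  also have "\<dots> = (Suc i)*b" by simp
  also have "\<dots> \<le> a*b" using \<open>i < a\<close> by (intro mult_le_mono1) simp
  finally show ?thesis .
qed

lemma div_lt: "p < a*b \<Longrightarrow> p div b < (a::nat)"
  by (simp add: less_mult_imp_div_less)

lemma mod_lt: "p < a*b \<Longrightarrow> p mod b < (b::nat)"
  by (metis mod_less_divisor mult_0_right not_less_zero neq0_conv)

lemma divmod_eq_iff: "(i div b = j div b \<and> i mod b = j mod (b::nat)) \<longleftrightarrow> i = j"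
  by (metis div_mult_mod_eq)

lemma kron_dims[simp]: "dim_row (kron A B) = dim_row A * dim_row B" "dim_col (kron A B) = dim_col A * dim_col B"
  by (auto simp: kron_def)

lemma kron_carrier[simp]: "A \<in> carrier_mat a a' \<Longrightarrow> B \<in> carrier_mat b b' \<Longrightarrow> kron A B \<in> carrier_mat (a*b) (a'*b')"
  unfolding carrier_mat_def by simp

lemma kron_idx[simp]: "i < dim_row A * dim_row B \<Longrightarrow> j < dim_col A * dim_col B \<Longrightarrow>
  kron A B $$ (i,j) = A $$ (i div dim_row B, j div dim_col B) * B $$ (i mod dim_row B, j mod dim_col B)"
  by (simp add: kron_def)

lemma madj_kron: "madj (kron A B) = kron (madj A) (madj B)"
proof (rule eq_matI)
  fix i j assume "i < dim_row (kron (madj A) (madj B))" "j < dim_col (kron (madj A) (madj B))"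
  then have i: "i < dim_col A * dim_col B" and j: "j < dim_row A * dim_row B" by auto
  have b: "i div dim_col B < dim_col A" "i mod dim_col B < dim_col B" "j div dim_row B < dim_row A" "j mod dim_row B < dim_row B"
    using div_lt[OF i] mod_lt[OF i] div_lt[OF j] mod_lt[OF j] by auto
  show "madj (kron A B) $$ (i,j) = kron (madj A) (madj B) $$ (i,j)"
    using i j b by simp
qed auto

lemma kron_mult:
  assumes A: "A \<in> carrier_mat a a'" and C: "C \<in> carrier_mat a' c" and B: "B \<in> carrier_mat b b'" and D: "D \<in> carrier_mat b' d"
  shows "kron A B * kron C D = kron (A * C) (B * D)"
proof (rule eq_matI)
  fix i j assume "i < dim_row (kron (A * C) (B * D))" "j < dim_col (kron (A * C) (B * D))"
  then have i: "i < a*b" and j: "j < c*d" using A B C D by auto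
  have "(kron A B * kron C D) $$ (i,j) = (\<Sum>p<a'*b'. kron A B $$ (i,p) * kron C D $$ (p,j))"
    using A B C D i j by simp
  also have "\<dots> = (\<Sum>x<a'. \<Sum>y<b'. kron A B $$ (i,x*b'+y) * kron C D $$ (x*b'+y,j))"
    by (rule sum_split_prod)
  also have "\<dots> = (\<Sum>x<a'. \<Sum>y<b'. (A $$ (i div b, x) * C $$ (x, j div d)) * (B $$ (i mod b, y) * D $$ (y, j mod d)))"
    using A B C D i j by (intro sum.cong refl) (simp add: idx_lt)
  also have "\<dots> = (\<Sum>x<a'. A $$ (i div b, x) * C $$ (x, j div d)) * (\<Sum>y<b'. B $$ (i mod b, y) * D $$ (y, j mod d))"
    by (simp add: sum_product)
  also have "\<dots> = kron (A * C) (B * D) $$ (i,j)"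
    using A B C D i j by (simp add: div_lt mod_lt)
  finally show "(kron A B * kron C D) $$ (i,j) = kron (A * C) (B * D) $$ (i,j)" .
qed (use A B C D in auto)

lemma kron_one: "kron (1\<^sub>m a) (1\<^sub>m b) = 1\<^sub>m (a*b)"
proof (rule eq_matI)
  fix i j assume "i < dim_row (1\<^sub>m (a*b))" "j < dim_col (1\<^sub>m (a*b))"
  then have i: "i < a*b" and j: "j < a*b" by auto
  show "kron (1\<^sub>m a) (1\<^sub>m b) $$ (i,j) = 1\<^sub>m (a*b) $$ (i,j)"
    using i j divmod_eq_iff[of i b j] by (auto simp: div_lt mod_lt)
qed auto

lemma kron_dmat: "kron (dmat a f) (dmat b g) = dmat (a*b) (\<lambda>p. f (p div b) * g (p mod b))"
proof (rule eq_matI)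
  fix i j assume "i < dim_row (dmat (a*b) (\<lambda>p. f (p div b) * g (p mod b)))" "j < dim_col (dmat (a*b) (\<lambda>p. f (p div b) * g (p mod b)))"
  then have i: "i < a*b" and j: "j < a*b" by auto
  show "kron (dmat a f) (dmat b g) $$ (i,j) = dmat (a*b) (\<lambda>p. f (p div b) * g (p mod b)) $$ (i,j)"
    using i j divmod_eq_iff[of i b j] by (auto simp: div_lt mod_lt)
qed auto

lemma kron_add_left: assumes "A \<in> carrier_mat a a'" "B \<in> carrier_mat a a'" shows "kron (A + B) C = kron A C + kron B C"
  using assms by (intro eq_matI) (auto simp: div_lt algebra_simps)

lemma kron_add_right: assumes "B \<in> carrier_mat b b'" "C \<in> carrier_mat b b'" shows "kron A (B + C) = kron A B + kron A C"
  using assms by (intro eq_matI) (auto simp: mod_lt algebra_simps)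

lemma kron_smult_left: "kron (c \<cdot>\<^sub>m A) B = c \<cdot>\<^sub>m kron A B"
  by (intro eq_matI) (auto simp: div_lt)

lemma kron_smult_right: "kron A (c \<cdot>\<^sub>m B) = c \<cdot>\<^sub>m kron A B"
  by (intro eq_matI) (auto simp: mod_lt)

lemma kron_zero_left: "B \<in> carrier_mat b b' \<Longrightarrow> kron (0\<^sub>m a a') B = 0\<^sub>m (a*b) (a'*b')"
  by (intro eq_matI) (auto simp: div_lt)

lemma unitary_kron: assumes "unitary a V" "unitary b W" shows "unitary (a*b) (kron V W)"
proof -
  note v = unitaryD[OF assms(1)] and w = unitaryD[OF assms(2)]
  have "madj (kron V W) * kron V W = kron (madj V * V) (madj W * W)"
    unfolding madj_kron by (rule kron_mult[OF v(2) v(1) w(2) w(1)])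
  moreover have "kron V W * madj (kron V W) = kron (V * madj V) (W * madj W)"
    unfolding madj_kron by (rule kron_mult[OF v(1) v(2) w(1) w(2)])
  ultimately show ?thesis using v w unfolding unitary_def by (simp add: kron_one)
qed

lemma kron_udv: assumes "V \<in> carrier_mat a a" "W \<in> carrier_mat b b"
  shows "kron (V * dmat a f * madj V) (W * dmat b g * madj W) = kron V W * dmat (a*b) (\<lambda>p. f (p div b) * g (p mod b)) * madj (kron V W)"
proof -
  have c: "V * dmat a f \<in> carrier_mat a a" "W * dmat b g \<in> carrier_mat b b" "madj V \<in> carrier_mat a a" "madj W \<in> carrier_mat b b"
    using assms by auto
  have "kron (V * dmat a f * madj V) (W * dmat b g * madj W) = kron (V * dmat a f) (W * dmat b g) * kron (madj V) (madj W)"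
    by (rule kron_mult[OF c(1) c(3) c(2) c(4), symmetric])
  also have "kron (V * dmat a f) (W * dmat b g) = kron V W * kron (dmat a f) (dmat b g)"
    by (rule kron_mult[OF assms(1) _ assms(2), symmetric]) auto
  finally show ?thesis by (simp add: kron_dmat madj_kron)
qed

lemma mtrace_add: "A \<in> carrier_mat n n \<Longrightarrow> B \<in> carrier_mat n n \<Longrightarrow> mtrace (A + B) = mtrace A + mtrace B"
  by (simp add: mtrace_def sum.distrib)

lemma mtrace_minus: "A \<in> carrier_mat n n \<Longrightarrow> B \<in> carrier_mat n n \<Longrightarrow> mtrace (A - B) = mtrace A - mtrace B"
  by (simp add: mtrace_def sum_subtractf)

lemma mtrace_smult: "A \<in> carrier_mat n n \<Longrightarrow> mtrace (c \<cdot>\<^sub>m A) = c * mtrace A"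
  by (simp add: mtrace_def sum_distrib_left)

lemma mtrace_zero[simp]: "mtrace (0\<^sub>m n n) = 0"
  by (simp add: mtrace_def)

lemma mtrace_comm: assumes "A \<in> carrier_mat n m" "B \<in> carrier_mat m n"
  shows "mtrace (A * B) = mtrace (B * A)"
proof -
  have "mtrace (A * B) = (\<Sum>i<n. \<Sum>k<m. A $$ (i,k) * B $$ (k,i))" using assms by (simp add: mtrace_def)
  also have "\<dots> = (\<Sum>k<m. \<Sum>i<n. B $$ (k,i) * A $$ (i,k))" by (subst sum.swap) (simp add: mult.commute)
  also have "\<dots> = mtrace (B * A)" using assms by (simp add: mtrace_def)
  finally show ?thesis .
qed

lemma ptrace2_carrier[simp]: "ptrace2 a b X \<in> carrier_mat a a"
  and ptrace2_dims[simp]: "dim_row (ptrace2 a b X) = a" "dim_col (ptrace2 a b X) = a"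
  by (auto simp: ptrace2_def)

lemma ptrace2_idx[simp]: "i < a \<Longrightarrow> k < a \<Longrightarrow> ptrace2 a b X $$ (i,k) = (\<Sum>\<beta><b. X $$ (i*b+\<beta>, k*b+\<beta>))"
  by (simp add: ptrace2_def)

lemma mtrace_ptrace2: assumes "X \<in> carrier_mat (a*b) (a*b)" shows "mtrace (ptrace2 a b X) = mtrace X"
  using assms by (simp add: mtrace_def sum_split_prod)

lemma ptrace2_kron: assumes "X \<in> carrier_mat a a" "Y \<in> carrier_mat b b"
  shows "ptrace2 a b (kron X Y) = mtrace Y \<cdot>\<^sub>m X"
  using assms by (intro eq_matI) (auto simp: mtrace_def idx_lt sum_distrib_left[symmetric] mult.commute)

lemma ptrace2_add: "A \<in> carrier_mat (a*b) (a*b) \<Longrightarrow> B \<in> carrier_mat (a*b) (a*b) \<Longrightarrow> ptrace2 a b (A + B) = ptrace2 a b A + ptrace2 a b B"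
  by (intro eq_matI) (auto simp: idx_lt sum.distrib)

lemma ptrace2_minus: "A \<in> carrier_mat (a*b) (a*b) \<Longrightarrow> B \<in> carrier_mat (a*b) (a*b) \<Longrightarrow> ptrace2 a b (A - B) = ptrace2 a b A - ptrace2 a b B"
  by (intro eq_matI) (auto simp: idx_lt sum_subtractf)

lemma ptrace2_smult: "A \<in> carrier_mat (a*b) (a*b) \<Longrightarrow> ptrace2 a b (c \<cdot>\<^sub>m A) = c \<cdot>\<^sub>m ptrace2 a b A"
  by (intro eq_matI) (auto simp: idx_lt sum_distrib_left)

lemma ptrace2_zero: "ptrace2 a b (0\<^sub>m (a*b) (a*b)) = 0\<^sub>m a a"
  by (intro eq_matI) (auto simp: idx_lt)

lemma ptrace2_mult_right: assumes Z: "Z \<in> carrier_mat (a*b) (a*b)" and X: "X \<in> carrier_mat a a"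
  shows "ptrace2 a b (Z * kron X (1\<^sub>m b)) = ptrace2 a b Z * X"
proof (rule eq_matI)
  fix i k assume "i < dim_row (ptrace2 a b Z * X)" "k < dim_col (ptrace2 a b Z * X)"
  then have i: "i < a" and k: "k < a" using X by auto
  have "ptrace2 a b (Z * kron X (1\<^sub>m b)) $$ (i,k) = (\<Sum>\<beta><b. \<Sum>p<a*b. Z $$ (i*b+\<beta>, p) * kron X (1\<^sub>m b) $$ (p, k*b+\<beta>))"
    using Z X i k by (simp add: idx_lt)
  also have "\<dots> = (\<Sum>\<beta><b. \<Sum>x<a. \<Sum>y<b. Z $$ (i*b+\<beta>, x*b+y) * kron X (1\<^sub>m b) $$ (x*b+y, k*b+\<beta>))"
    by (simp only: sum_split_prod)
  also have "\<dots> = (\<Sum>\<beta><b. \<Sum>x<a. \<Sum>y<b. if y = \<beta> then Z $$ (i*b+\<beta>, x*b+\<beta>) * X $$ (x,k) else 0)"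
    using Z X i k by (intro sum.cong refl) (auto simp: idx_lt)
  also have "\<dots> = (\<Sum>\<beta><b. \<Sum>x<a. Z $$ (i*b+\<beta>, x*b+\<beta>) * X $$ (x,k))"
    by (simp add: sum.delta)
  also have "\<dots> = (\<Sum>x<a. (\<Sum>\<beta><b. Z $$ (i*b+\<beta>, x*b+\<beta>)) * X $$ (x,k))"
    by (subst sum.swap) (simp add: sum_distrib_right)
  also have "\<dots> = (ptrace2 a b Z * X) $$ (i,k)" using X i k by simp
  finally show "ptrace2 a b (Z * kron X (1\<^sub>m b)) $$ (i,k) = (ptrace2 a b Z * X) $$ (i,k)" .
qed (use X in auto)

lemma ptrace2_mult_left: assumes Z: "Z \<in> carrier_mat (a*b) (a*b)" and X: "X \<in> carrier_mat a a"
  shows "ptrace2 a b (kron X (1\<^sub>m b) * Z) = X * ptrace2 a b Z"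
proof (rule eq_matI)
  fix i k assume "i < dim_row (X * ptrace2 a b Z)" "k < dim_col (X * ptrace2 a b Z)"
  then have i: "i < a" and k: "k < a" using X by auto
  have "ptrace2 a b (kron X (1\<^sub>m b) * Z) $$ (i,k) = (\<Sum>\<beta><b. \<Sum>p<a*b. kron X (1\<^sub>m b) $$ (i*b+\<beta>, p) * Z $$ (p, k*b+\<beta>))"
    using Z X i k by (simp add: idx_lt)
  also have "\<dots> = (\<Sum>\<beta><b. \<Sum>x<a. \<Sum>y<b. kron X (1\<^sub>m b) $$ (i*b+\<beta>, x*b+y) * Z $$ (x*b+y, k*b+\<beta>))"
    by (simp only: sum_split_prod)
  also have "\<dots> = (\<Sum>\<beta><b. \<Sum>x<a. \<Sum>y<b. if y = \<beta> then X $$ (i,x) * Z $$ (x*b+\<beta>, k*b+\<beta>) else 0)"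
    using Z X i k by (intro sum.cong refl) (auto simp: idx_lt)
  also have "\<dots> = (\<Sum>\<beta><b. \<Sum>x<a. X $$ (i,x) * Z $$ (x*b+\<beta>, k*b+\<beta>))"
    by (simp add: sum.delta)
  also have "\<dots> = (\<Sum>x<a. X $$ (i,x) * (\<Sum>\<beta><b. Z $$ (x*b+\<beta>, k*b+\<beta>)))"
    by (subst sum.swap) (simp add: sum_distrib_left)
  also have "\<dots> = (X * ptrace2 a b Z) $$ (i,k)" using X i k by simp
  finally show "ptrace2 a b (kron X (1\<^sub>m b) * Z) $$ (i,k) = (X * ptrace2 a b Z) $$ (i,k)" .
qed (use X in auto)

lemma mtrace_ptrace2_right: assumes "W \<in> carrier_mat (a*b) (a*b)" "X \<in> carrier_mat a a"
  shows "mtrace (ptrace2 a b W * X) = mtrace (W * kron X (1\<^sub>m b))"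
  using assms by (simp add: ptrace2_mult_right[symmetric] mtrace_ptrace2)

lemma mtrace_ptrace2_left: assumes "W \<in> carrier_mat (a*b) (a*b)" "X \<in> carrier_mat a a"
  shows "mtrace (X * ptrace2 a b W) = mtrace (kron X (1\<^sub>m b) * W)"
  using assms by (simp add: ptrace2_mult_left[symmetric] mtrace_ptrace2)



lemma sa_add: "self_adjoint n A \<Longrightarrow> self_adjoint n B \<Longrightarrow> self_adjoint n (A + B)"
  unfolding self_adjoint_def using madj_add[of A n n B] by simp

lemma sa_kron: "self_adjoint a A \<Longrightarrow> self_adjoint b B \<Longrightarrow> self_adjoint (a*b) (kron A B)"
  unfolding self_adjoint_def by (simp add: madj_kron)

lemma sa_one: "self_adjoint n (1\<^sub>m n)"
  unfolding self_adjoint_def by simp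

lemma unitary_mexp: assumes "self_adjoint n H"
  shows "unitary n (mexp ((- \<i> * complex_of_real t) \<cdot>\<^sub>m H))"
proof -
  obtain V l where V: "unitary n V" and H: "H = V * dmat n (\<lambda>i. complex_of_real (l i)) * madj V"
    using spectral[OF assms] by blast
  note v = unitaryD[OF V]
  define a where "a i = exp (- \<i> * complex_of_real t * complex_of_real (l i))" for i
  have U: "mexp ((- \<i> * complex_of_real t) \<cdot>\<^sub>m H) = V * dmat n a * madj V"
    unfolding H a_def by (simp add: udv_smult[OF v(1)] udv_mexp[OF V])
  have "madj (V * dmat n a * madj V) * (V * dmat n a * madj V) = V * dmat n (\<lambda>i. cnj (a i) * a i) * madj V"
    by (simp add: udv_madj[OF v(1)] udv_mult[OF V])
  also have "(\<lambda>i. cnj (a i) * a i) = (\<lambda>i. 1)"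
  proof
    fix i
    have "a i = cis (- (t * l i))" unfolding a_def cis_conv_exp by (simp add: mult.assoc)
    then have "cnj (a i) * a i = cis (t * l i) * cis (- (t * l i))" by (simp add: cis_cnj)
    also have "\<dots> = 1" by (simp add: cis_mult)
    finally show "cnj (a i) * a i = 1" .
  qed
  finally have 1: "madj (V * dmat n a * madj V) * (V * dmat n a * madj V) = 1\<^sub>m n" using udv_one[OF V] by simp
  have 2: "(V * dmat n a * madj V) * madj (V * dmat n a * madj V) = 1\<^sub>m n"
    by (rule mat_mult_left_right_inverse[OF _ _ 1]) (use v in auto)
  show ?thesis unfolding U unitary_def using 1 2 v by simp
qed

lemma gibbs_diag: assumes "self_adjoint n H" "n > 0"
  shows "\<exists>W lam Z. unitary n W \<and> H = W * dmat n (\<lambda>i. complex_of_real (lam i)) * madj W \<and> Z > 0 \<and>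
     gibbs b H = W * dmat n (\<lambda>i. complex_of_real (exp (- b * lam i) / Z)) * madj W \<and>
     (\<Sum>i<n. exp (- b * lam i) / Z) = 1"
proof -
  obtain W lam where W: "unitary n W" and H: "H = W * dmat n (\<lambda>i. complex_of_real (lam i)) * madj W"
    using spectral[OF assms(1)] by blast
  note w = unitaryD[OF W]
  define Z where "Z = (\<Sum>i<n. exp (- b * lam i))"
  have Z: "Z > 0" unfolding Z_def using assms(2) by (intro sum_pos) auto
  have me: "mexp ((- complex_of_real b) \<cdot>\<^sub>m H) = W * dmat n (\<lambda>i. complex_of_real (exp (- b * lam i))) * madj W"
    unfolding H by (simp add: udv_smult[OF w(1)] udv_mexp[OF W] exp_of_real[symmetric])
  have tr: "mtrace (mexp ((- complex_of_real b) \<cdot>\<^sub>m H)) = complex_of_real Z"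
    unfolding me udv_mtrace[OF W] Z_def by simp
  have tr': "mtrace (W * dmat n (\<lambda>i. complex_of_real (exp (- b * lam i))) * madj W) = complex_of_real Z"
    using tr unfolding me .
  have "gibbs b H = W * dmat n (\<lambda>i. complex_of_real (exp (- b * lam i) / Z)) * madj W"
    unfolding gibbs_def me tr' using Z by (simp add: udv_smult[OF w(1)])
  moreover have "(\<Sum>i<n. exp (- b * lam i) / Z) = 1" using Z unfolding Z_def[symmetric]
    by (simp add: sum_divide_distrib[symmetric] Z_def)
  ultimately show ?thesis using W H Z by blast
qed

lemma gibbs_carrier: "self_adjoint n H \<Longrightarrow> gibbs b H \<in> carrier_mat n n"
  unfolding gibbs_def mexp_def self_adjoint_def by auto

lemma gibbs_trace: assumes "self_adjoint n H" "n > 0" shows "mtrace (gibbs b H) = 1"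
proof -
  obtain W lam Z where W: "unitary n W" and Z: "Z > 0" and
    g: "gibbs b H = W * dmat n (\<lambda>i. complex_of_real (exp (- b * lam i) / Z)) * madj W" and
    s: "(\<Sum>i<n. exp (- b * lam i) / Z) = 1"
    using gibbs_diag[OF assms, of b] by blast
  have "mtrace (gibbs b H) = complex_of_real (\<Sum>i<n. exp (- b * lam i) / Z)"
    unfolding g udv_mtrace[OF W] by (simp only: of_real_sum)
  also have "\<dots> = 1" by (simp only: s of_real_1)
  finally show ?thesis .
qed

lemma mult_dmat_idx: "A \<in> carrier_mat n n \<Longrightarrow> p < n \<Longrightarrow> q < n \<Longrightarrow> (A * dmat n d) $$ (p,q) = A $$ (p,q) * d q"
  by (simp add: if_distrib[where f="\<lambda>x. _ * x"] sum.delta' cong: if_cong)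

lemma dmat_mult_idx: "A \<in> carrier_mat n n \<Longrightarrow> p < n \<Longrightarrow> q < n \<Longrightarrow> (dmat n d * A) $$ (p,q) = d p * A $$ (p,q)"
  by (simp add: if_distrib[where f="\<lambda>x. x * _"] sum.delta cong: if_cong)

lemma cj_mult: assumes Q: "unitary n Q" and X: "X \<in> carrier_mat n n" and Y: "Y \<in> carrier_mat n n"
  shows "madj Q * (X * Y) * Q = (madj Q * X * Q) * (madj Q * Y * Q)"
proof -
  note q = unitaryD[OF Q]
  have "(madj Q * X * Q) * (madj Q * Y * Q) = madj Q * (X * (Q * (madj Q * (Y * Q))))"
    using q X Y by (simp add: assoc_mult_mat[of _ n n _ n _ n])
  also have "Q * (madj Q * (Y * Q)) = Y * Q" by (rule cancel_l[OF q(1) q(2) mult_carrier_sq[OF Y q(1)] q(4)])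
  finally show ?thesis using q X Y by (simp add: assoc_mult_mat[of _ n n _ n _ n])
qed

lemma cj_udv: assumes Q: "unitary n Q"
  shows "madj Q * (Q * dmat n d * madj Q) * Q = dmat n d"
proof -
  note q = unitaryD[OF Q]
  have "madj Q * (Q * dmat n d * madj Q) * Q = madj Q * (Q * (dmat n d * (madj Q * Q)))"
    using q by (simp add: assoc_mult_mat[of _ n n _ n _ n])
  also have "\<dots> = dmat n d * (madj Q * Q)" by (rule cancel_l[OF q(2) q(1) mult_carrier_sq[OF dmat_carrier mult_carrier_sq[OF q(2) q(1)]] q(3)])
  finally show ?thesis using q by simp
qed

lemma uncj: assumes Q: "unitary n Q" and X: "X \<in> carrier_mat n n"
  shows "Q * (madj Q * X * Q) * madj Q = X"
proof -
  note q = unitaryD[OF Q]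
  have "Q * (madj Q * X * Q) * madj Q = Q * (madj Q * (X * (Q * madj Q)))"
    using q X by (simp add: assoc_mult_mat[of _ n n _ n _ n])
  also have "\<dots> = X * (Q * madj Q)" by (rule cancel_l[OF q(1) q(2) mult_carrier_sq[OF X mult_carrier_sq[OF q(1) q(2)]] q(4)])
  finally show ?thesis using q X by (simp add: assoc_mult_mat[of _ n n _ n _ n])
qed

lemma comm_diag:
  assumes Q: "unitary n Q" and U: "U \<in> carrier_mat n n"
    and c: "U * (Q * dmat n d * madj Q) = (Q * dmat n d * madj Q) * U"
    and F: "\<And>p q. p < n \<Longrightarrow> q < n \<Longrightarrow> d p = d q \<Longrightarrow> F p = F q"
  shows "U * (Q * dmat n F * madj Q) = (Q * dmat n F * madj Q) * U"
proof -
  note q = unitaryD[OF Q]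
  define U' where "U' = madj Q * U * Q"
  have U': "U' \<in> carrier_mat n n" unfolding U'_def using q U by simp
  have "madj Q * (U * (Q * dmat n d * madj Q)) * Q = madj Q * ((Q * dmat n d * madj Q) * U) * Q"
    using c by simp
  then have e: "U' * dmat n d = dmat n d * U'"
    unfolding U'_def cj_mult[OF Q U udv_carrier[OF q(1)]] cj_mult[OF Q udv_carrier[OF q(1)] U] cj_udv[OF Q] .
  have eF: "U' * dmat n F = dmat n F * U'"
  proof (rule eq_matI)
    fix p r assume "p < dim_row (dmat n F * U')" "r < dim_col (dmat n F * U')"
    then have p: "p < n" and r: "r < n" using U' by auto
    have "(U' * dmat n d) $$ (p,r) = (dmat n d * U') $$ (p,r)" using e by simp
    then have "U' $$ (p,r) * d r = d p * U' $$ (p,r)" using U' p r by (simp add: mult_dmat_idx dmat_mult_idx del: mult_idx)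
    then have "U' $$ (p,r) = 0 \<or> d p = d r" by (metis mult.commute mult_cancel_left)
    then have "U' $$ (p,r) * F r = F p * U' $$ (p,r)" using F[OF p r] by auto
    then show "(U' * dmat n F) $$ (p,r) = (dmat n F * U') $$ (p,r)" using U' p r by (simp add: mult_dmat_idx dmat_mult_idx del: mult_idx)
  qed (use U' in auto)
  have "madj Q * (U * (Q * dmat n F * madj Q)) * Q = madj Q * ((Q * dmat n F * madj Q) * U) * Q"
    unfolding cj_mult[OF Q U udv_carrier[OF q(1)]] cj_mult[OF Q udv_carrier[OF q(1)] U] cj_udv[OF Q]
    using eF unfolding U'_def .
  then have "Q * (madj Q * (U * (Q * dmat n F * madj Q)) * Q) * madj Q = Q * (madj Q * ((Q * dmat n F * madj Q) * U) * Q) * madj Q"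
    by simp
  then show ?thesis using uncj[OF Q] U q by simp
qed



lemma cj_gen: assumes Q: "unitary n Q" and E: "E \<in> carrier_mat n n"
  shows "madj Q * (Q * E * madj Q) * Q = E"
proof -
  note q = unitaryD[OF Q]
  have "madj Q * (Q * E * madj Q) * Q = madj Q * (Q * (E * (madj Q * Q)))"
    using q E by (simp add: assoc_mult_mat[of _ n n _ n _ n])
  also have "\<dots> = E * (madj Q * Q)" by (rule cancel_l[OF q(2) q(1) mult_carrier_sq[OF E mult_carrier_sq[OF q(2) q(1)]] q(3)])
  finally show ?thesis using q E by (simp add: assoc_mult_mat[of _ n n _ n _ n])
qed

lemma udv_add: assumes "V \<in> carrier_mat n n"
  shows "V * dmat n a * madj V + V * dmat n b * madj V = V * dmat n (\<lambda>i. a i + b i) * madj V"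
proof -
  have da: "dmat n a + dmat n b = dmat n (\<lambda>i. a i + b i)" by (intro eq_matI) auto
  have "V * dmat n a * madj V + V * dmat n b * madj V = (V * dmat n a + V * dmat n b) * madj V"
    using assms by (simp add: add_mult_distrib_mat[of _ n n _ _ n])
  also have "V * dmat n a + V * dmat n b = V * (dmat n a + dmat n b)"
    using assms by (simp add: mult_add_distrib_mat[of _ n n _ n])
  finally show ?thesis unfolding da .
qed

lemma udv_zero: assumes "V \<in> carrier_mat n n" shows "V * dmat n (\<lambda>_. 0) * madj V = 0\<^sub>m n n"
proof -
  have "dmat n (\<lambda>_. 0) = 0\<^sub>m n n" by (intro eq_matI) auto
  then show ?thesis using assms by simp
qed

lemma psd_diag_nonneg:
  assumes st: "is_state d B" and V: "unitary d V" and B: "B = V * dmat d (\<lambda>i. complex_of_real (b i)) * madj V"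
    and i: "i < d"
  shows "b i \<ge> 0"
proof -
  note v = unitaryD[OF V]
  define w where "w = col V i"
  have w: "w \<in> carrier_vec d" unfolding w_def by (intro carrier_vecI) (use v(1) in simp)
  have Bc: "B \<in> carrier_mat d d" using st unfolding is_state_def self_adjoint_def by simp
  have "0 \<le> Re (\<Sum>k<d. cnj (w $ k) * ((B *\<^sub>v w) $ k))" using st w unfolding is_state_def by blast
  also have "(\<Sum>k<d. cnj (w $ k) * ((B *\<^sub>v w) $ k)) = (\<Sum>k<d. \<Sum>l<d. cnj (V $$ (k,i)) * B $$ (k,l) * V $$ (l,i))"
    unfolding w_def using v Bc i by (simp add: scalar_prod_def atLeast0LessThan sum_distrib_left mult.assoc)
  also have "\<dots> = (madj V * B * V) $$ (i,i)"
    using v Bc i by (simp add: sum_distrib_right) (subst sum.swap, simp)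
  also have "madj V * B * V = dmat d (\<lambda>i. complex_of_real (b i))"
    unfolding B by (rule cj_udv[OF V])
  finally show ?thesis using i by simp
qed

lemma trace_cdc: assumes C: "C \<in> carrier_mat d d"
  shows "mtrace (C * dmat d (\<lambda>i. complex_of_real (b i)) * madj C) = complex_of_real (\<Sum>r<d. \<Sum>k<d. b k * (cmod (C $$ (r,k)))^2)"
proof -
  have aux: "\<And>z x. z * complex_of_real x * cnj z = complex_of_real (x * (cmod z)^2)"
  proof -
    fix z x
    have "z * complex_of_real x * cnj z = complex_of_real x * (z * cnj z)" by (simp add: mult_ac)
    also have "\<dots> = complex_of_real x * complex_of_real ((cmod z)^2)" by (simp only: complex_norm_square)
    also have "\<dots> = complex_of_real (x * (cmod z)^2)" by (simp only: of_real_mult)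
    finally show "z * complex_of_real x * cnj z = complex_of_real (x * (cmod z)^2)" .
  qed
  have "mtrace (C * dmat d (\<lambda>i. complex_of_real (b i)) * madj C) = (\<Sum>r<d. \<Sum>k<d. C $$ (r,k) * complex_of_real (b k) * cnj (C $$ (r,k)))"
    unfolding mtrace_def using C by (simp add: udv_idx del: mult_idx)
  also have "\<dots> = (\<Sum>r<d. \<Sum>k<d. complex_of_real (b k * (cmod (C $$ (r,k)))^2))"
    by (simp only: aux)
  also have "\<dots> = complex_of_real (\<Sum>r<d. \<Sum>k<d. b k * (cmod (C $$ (r,k)))^2)" by (simp only: of_real_sum)
  finally show ?thesis .
qed

definition kr_sum :: "nat \<Rightarrow> complex mat list \<Rightarrow> complex mat \<Rightarrow> complex mat" where
  "kr_sum d Ks \<rho> = foldr (\<lambda>K B. K * \<rho> * madj K + B) Ks (0\<^sub>m d d)"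

lemma kr_sum_carrier: "set Ks \<subseteq> carrier_mat d d \<Longrightarrow> \<rho> \<in> carrier_mat d d \<Longrightarrow> kr_sum d Ks \<rho> \<in> carrier_mat d d"
  unfolding kr_sum_def by (induction Ks) auto

lemma kr_sum_trace: assumes "set Ks \<subseteq> carrier_mat d d" "\<rho> \<in> carrier_mat d d" "P \<in> carrier_mat d d"
  shows "mtrace (P * kr_sum d Ks \<rho> * P) = sum_list (map (\<lambda>K. mtrace (P * (K * \<rho> * madj K) * P)) Ks)"
  using assms
proof (induction Ks)
  case Nil then show ?case by (simp add: kr_sum_def)
next
  case (Cons K Ks)
  have K: "K \<in> carrier_mat d d" using Cons by simp
  have X: "K * \<rho> * madj K \<in> carrier_mat d d" using K Cons by (metis madj_carrier mult_carrier_sq)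
  have R: "kr_sum d Ks \<rho> \<in> carrier_mat d d" using Cons kr_sum_carrier by auto
  have e: "kr_sum d (K # Ks) \<rho> = K * \<rho> * madj K + kr_sum d Ks \<rho>" by (simp add: kr_sum_def)
  have "P * kr_sum d (K # Ks) \<rho> * P = P * (K * \<rho> * madj K) * P + P * kr_sum d Ks \<rho> * P"
    unfolding e using X R Cons(4)
    by (simp add: mult_add_distrib_mat[of _ d d _ d] add_mult_distrib_mat[of _ d d _ _ d] del: assoc_mult_mat)
  then show ?case using Cons X R by (simp add: mtrace_add[of _ d] del: assoc_mult_mat)
qed

definition Inv :: "nat \<Rightarrow> complex mat \<Rightarrow> complex mat \<Rightarrow> bool" where
  "Inv d P A \<longleftrightarrow> A \<in> carrier_mat d d \<and> P * A = P * A * P"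

lemma Inv_mult: assumes P: "P \<in> carrier_mat d d" and A: "Inv d P A" and B: "Inv d P B" shows "Inv d P (A * B)"
proof -
  have a: "A \<in> carrier_mat d d" "P * A = P * (A * P)" using A P unfolding Inv_def by auto
  have b: "B \<in> carrier_mat d d" "P * B = P * (B * P)" using B P unfolding Inv_def by auto
  note AS = assoc_mult_mat[of _ d d _ d _ d]
  have "P * (A * B) = (P * A) * B" using P a(1) b(1) by (simp add: AS)
  also have "\<dots> = (P * (A * P)) * B" using a(2) by simp
  also have "\<dots> = (P * A) * (P * B)" using P a(1) b(1) by (simp add: AS)
  also have "\<dots> = (P * A) * (P * (B * P))" using b(2) by simp
  also have "\<dots> = (P * (A * P)) * (B * P)" using P a(1) b(1) by (simp add: AS)
  also have "\<dots> = (P * A) * (B * P)" using a(2) by simp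
  also have "\<dots> = P * (A * B) * P" using P a(1) b(1) by (simp add: AS)
  finally show ?thesis using a b unfolding Inv_def by simp
qed

lemma Inv_add: assumes P: "P \<in> carrier_mat d d" and A: "Inv d P A" and B: "Inv d P B" shows "Inv d P (A + B)"
proof -
  have a: "A \<in> carrier_mat d d" "P * A = P * A * P" using A unfolding Inv_def by auto
  have b: "B \<in> carrier_mat d d" "P * B = P * B * P" using B unfolding Inv_def by auto
  have "P * (A + B) = P * A + P * B" using P a(1) b(1) by (simp add: mult_add_distrib_mat[of _ d d _ d])
  also have "\<dots> = P * A * P + P * B * P" using a(2) b(2) by simp
  also have "\<dots> = (P * A + P * B) * P" using P a(1) b(1) by (simp add: add_mult_distrib_mat[of _ d d _ _ d])
  also have "\<dots> = P * (A + B) * P" using P a(1) b(1) by (simp add: mult_add_distrib_mat[of _ d d _ d])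
  finally show ?thesis using a b unfolding Inv_def by simp
qed

lemma Inv_smult: assumes P: "P \<in> carrier_mat d d" and A: "Inv d P A" shows "Inv d P (x \<cdot>\<^sub>m A)"
proof -
  have a: "A \<in> carrier_mat d d" "P * A = P * A * P" using A unfolding Inv_def by auto
  have "P * (x \<cdot>\<^sub>m A) = x \<cdot>\<^sub>m (P * A)" using P a(1) by (simp add: mult_smult_distrib[of _ d d _ d])
  also have "\<dots> = x \<cdot>\<^sub>m (P * A * P)" using a(2) by simp
  also have "\<dots> = P * (x \<cdot>\<^sub>m A) * P" using P a(1)
    by (simp add: mult_smult_distrib[of _ d d _ d] mult_smult_assoc_mat[of _ d d _ d])
  finally show ?thesis using a unfolding Inv_def by simp
qed

lemma Inv_zero: "P \<in> carrier_mat d d \<Longrightarrow> Inv d P (0\<^sub>m d d)"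
  unfolding Inv_def by simp

lemma Inv_prods: assumes P: "P \<in> carrier_mat d d" "P * P = P" and K: "\<And>K. K \<in> set Ks \<Longrightarrow> Inv d P K"
  shows "set ws \<subseteq> set Ks \<Longrightarrow> Inv d P (foldr (\<lambda>A B. A * B) ws (1\<^sub>m d))"
proof (induction ws)
  case Nil then show ?case using P unfolding Inv_def by simp
next
  case (Cons w ws)
  then show ?case using Inv_mult[OF P(1) K] by simp
qed

lemma Inv_span: assumes P: "P \<in> carrier_mat d d" and S: "\<And>A. A \<in> S \<Longrightarrow> Inv d P A"
  and X: "in_span d S X" shows "Inv d P X"
proof -
  obtain cs where cs: "set (map snd cs) \<subseteq> S" and X: "X = foldr (\<lambda>(c,A) B. c \<cdot>\<^sub>m A + B) cs (0\<^sub>m d d)"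
    using X unfolding in_span_def by blast
  have "set (map snd cs) \<subseteq> S \<Longrightarrow> Inv d P (foldr (\<lambda>(c,A) B. c \<cdot>\<^sub>m A + B) cs (0\<^sub>m d d))"
  proof (induction cs)
    case Nil then show ?case using Inv_zero[OF P] by simp
  next
    case (Cons ca cs)
    obtain c A where ca: "ca = (c, A)" by force
    have "Inv d P A" using Cons.prems ca S by auto
    then show ?case using Cons ca Inv_add[OF P Inv_smult[OF P]] by simp
  qed
  then show ?thesis using cs X by simp
qed



lemma sum_list_of_real: "sum_list (map (\<lambda>K. complex_of_real (t K)) Ks) = complex_of_real (sum_list (map t Ks))"
  by (induction Ks) auto

lemma faithful:
  assumes prim: "primitive d L"
    and st: "is_state d B"
    and V: "unitary d V" and B: "B = V * dmat d (\<lambda>i. complex_of_real (b i)) * madj V"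
    and c_def: "c = (\<lambda>i. if b i = 0 then 1 else 0 :: complex)"
    and pres: "\<And>Y. Y \<in> carrier_mat d d \<Longrightarrow> Y * (V * dmat d c * madj V) = 0\<^sub>m d d \<Longrightarrow> L Y * (V * dmat d c * madj V) = 0\<^sub>m d d"
  shows "\<forall>i<d. b i \<noteq> 0"
proof (rule ccontr)
  assume "\<not> (\<forall>i<d. b i \<noteq> 0)"
  then obtain i0 where i0: "i0 < d" "b i0 = 0" by blast
  note v = unitaryD[OF V]
  note AS = assoc_mult_mat[of _ d d _ d _ d]
  define P where "P = V * dmat d c * madj V"
  have Pc: "P \<in> carrier_mat d d" unfolding P_def using v by simp
  have cc: "(\<lambda>i. cnj (c i)) = c" "(\<lambda>i. c i * c i) = c" unfolding c_def by auto
  have Padj: "madj P = P" unfolding P_def udv_madj[OF v(1)] cc ..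
  have PP: "P * P = P" unfolding P_def udv_mult[OF V] cc ..
  have bnn: "\<And>i. i < d \<Longrightarrow> b i \<ge> 0" using psd_diag_nonneg[OF st V B] by blast
  have Bc: "B \<in> carrier_mat d d" unfolding B using v by simp
  have "complex_of_real (\<Sum>i<d. b i) = mtrace B" unfolding B udv_mtrace[OF V] by (simp only: of_real_sum)
  also have "\<dots> = 1" using st unfolding is_state_def by simp
  finally have "(\<Sum>i<d. b i) = 1" by (simp only: of_real_eq_1_iff)
  then obtain i1 where i1: "i1 < d" "b i1 \<noteq> 0" by (metis (mono_tags, lifting) lessThan_iff sum.neutral zero_neq_one)
  have BP: "B * P = 0\<^sub>m d d"
  proof -
    have "B * P = V * dmat d (\<lambda>i. complex_of_real (b i) * c i) * madj V" unfolding B P_def by (rule udv_mult[OF V])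
    also have "(\<lambda>i. complex_of_real (b i) * c i) = (\<lambda>_. 0)" unfolding c_def by auto
    finally show ?thesis using udv_zero[OF v(1)] by simp
  qed
  obtain Ks n0 where kr: "kraus_rep d L Ks" and sp: "\<And>X. X \<in> carrier_mat d d \<Longrightarrow>
      in_span d {foldr (\<lambda>A B. A * B) ws (1\<^sub>m d) | ws. length ws = n0 \<and> set ws \<subseteq> set Ks} X"
    using prim unfolding primitive_def by blast
  have Ksc: "set Ks \<subseteq> carrier_mat d d" using kr unfolding kraus_rep_def by auto
  have LB: "L B = kr_sum d Ks B" using kr Bc unfolding kraus_rep_def kr_sum_def by auto
  have krc: "kr_sum d Ks B \<in> carrier_mat d d" using kr_sum_carrier[OF Ksc Bc] .
  have "kr_sum d Ks B * P = 0\<^sub>m d d" using pres[OF Bc] BP LB unfolding P_def by simp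
  then have "P * kr_sum d Ks B * P = 0\<^sub>m d d" using Pc krc by (simp add: AS)
  then have "sum_list (map (\<lambda>K. mtrace (P * (K * B * madj K) * P)) Ks) = 0"
    using kr_sum_trace[OF Ksc Bc Pc] by simp
  moreover define t where "t K = (\<Sum>r<d. \<Sum>k<d. b k * (cmod ((P * K * V) $$ (r,k)))^2)" for K
  moreover have tK: "\<And>K. K \<in> set Ks \<Longrightarrow> mtrace (P * (K * B * madj K) * P) = complex_of_real (t K)"
  proof -
    fix K assume "K \<in> set Ks"
    then have K: "K \<in> carrier_mat d d" using Ksc by auto
    have Ka: "madj K \<in> carrier_mat d d" using K by simp
    have "P * (K * B * madj K) * P = (P * K * V) * dmat d (\<lambda>i. complex_of_real (b i)) * madj (P * K * V)"
      unfolding B using Pc K Ka v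
      by (simp add: madj_mult[of _ d d _ d] Padj AS)
    then show "mtrace (P * (K * B * madj K) * P) = complex_of_real (t K)"
      unfolding t_def using trace_cdc[of "P * K * V" d b] Pc K v by simp
  qed
  ultimately have "sum_list (map (\<lambda>K. complex_of_real (t K)) Ks) = 0"
    by (metis (no_types, lifting) map_eq_conv)
  then have "sum_list (map t Ks) = 0" unfolding sum_list_of_real by simp
  moreover have tnn: "\<And>K. 0 \<le> t K" unfolding t_def using bnn by (intro sum_nonneg) auto
  ultimately have t0: "\<And>K. K \<in> set Ks \<Longrightarrow> t K = 0" using sum_list_nonneg_eq_0_iff[of "map t Ks"] by auto
  define R where "R = V * dmat d (\<lambda>i. 1 - c i) * madj V"
  have Rc: "R \<in> carrier_mat d d" unfolding R_def using v by simp
  have PR: "P + R = 1\<^sub>m d" unfolding P_def R_def udv_add[OF v(1)] using udv_one[OF V] by simp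
  have InvK: "\<And>K. K \<in> set Ks \<Longrightarrow> Inv d P K"
  proof -
    fix K assume KK: "K \<in> set Ks"
    then have K: "K \<in> carrier_mat d d" using Ksc by auto
    have z: "\<And>r k. r < d \<Longrightarrow> k < d \<Longrightarrow> b k \<noteq> 0 \<Longrightarrow> (P * K * V) $$ (r,k) = 0"
    proof -
      fix r k assume r: "r < d" and k: "k < d" and bk: "b k \<noteq> 0"
      have "(\<Sum>k<d. b k * (cmod ((P * K * V) $$ (r,k)))^2) = 0"
        using t0[OF KK] unfolding t_def using bnn r by (subst (asm) sum_nonneg_eq_0_iff) (auto intro!: sum_nonneg)
      then have "b k * (cmod ((P * K * V) $$ (r,k)))^2 = 0"
        using bnn k by (subst (asm) sum_nonneg_eq_0_iff) auto
      then show "(P * K * V) $$ (r,k) = 0" using bk by simp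
    qed
    have PKR: "P * K * R = 0\<^sub>m d d"
    proof -
      have "P * K * R = (P * K * V) * dmat d (\<lambda>i. 1 - c i) * madj V" unfolding R_def using Pc K v by (simp add: AS)
      also have "\<dots> = 0\<^sub>m d d"
      proof (rule eq_matI)
        fix r j assume "r < dim_row (0\<^sub>m d d)" "j < dim_col (0\<^sub>m d d)"
        then have r: "r < d" and j: "j < d" by auto
        have PKV: "P * K * V \<in> carrier_mat d d" using Pc K v by simp
        have "((P * K * V) * dmat d (\<lambda>i. 1 - c i) * madj V) $$ (r,j) = (\<Sum>k<d. (P * K * V) $$ (r,k) * (1 - c k) * cnj (V $$ (j,k)))"
          using udv_idx[OF PKV v(1) r j] .
        also have "\<dots> = 0" using z r unfolding c_def by (intro sum.neutral) auto
        finally show "((P * K * V) * dmat d (\<lambda>i. 1 - c i) * madj V) $$ (r,j) = 0\<^sub>m d d $$ (r,j)" using r j by simp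
      qed (use Pc K v in auto)
      finally show ?thesis .
    qed
    have e0: "P * K = P * K * (P + R)" unfolding PR using Pc K by simp
    have "P * K * (P + R) = P * K * P + P * K * R" using Pc K Rc by (simp add: mult_add_distrib_mat[of _ d d _ d] del: assoc_mult_mat)
    then have e1: "P * K * (P + R) = P * K * P" using PKR Pc K Rc by (simp del: assoc_mult_mat)
    have "P * K = P * K * P" using e0 e1 by (rule trans)
    then show "Inv d P K" using K unfolding Inv_def by simp
  qed
  have InvAll: "\<And>X. X \<in> carrier_mat d d \<Longrightarrow> Inv d P X"
  proof -
    fix X :: "complex mat" assume X: "X \<in> carrier_mat d d"
    show "Inv d P X"
    proof (rule Inv_span[OF Pc _ sp[OF X]])
      fix A assume "A \<in> {foldr (\<lambda>A B. A * B) ws (1\<^sub>m d) | ws. length ws = n0 \<and> set ws \<subseteq> set Ks}"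
      then obtain ws where "A = foldr (\<lambda>A B. A * B) ws (1\<^sub>m d)" "set ws \<subseteq> set Ks" by blast
      then show "Inv d P A" using Inv_prods[OF Pc PP InvK] by simp
    qed
  qed
  define E where "E = mat d d (\<lambda>(p,q). if p = i0 \<and> q = i1 then 1 else 0 :: complex)"
  have Ec: "E \<in> carrier_mat d d" unfolding E_def by simp
  define X where "X = V * E * madj V"
  have Xc: "X \<in> carrier_mat d d" unfolding X_def using v Ec by simp
  have "P * X = P * X * P" using InvAll[OF Xc] unfolding Inv_def by simp
  then have "madj V * (P * X) * V = madj V * (P * X * P) * V" by simp
  then have "(madj V * P * V) * (madj V * X * V) = ((madj V * P * V) * (madj V * X * V)) * (madj V * P * V)"
    by (simp only: cj_mult[OF V Pc Xc] cj_mult[OF V mult_carrier_sq[OF Pc Xc] Pc])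
  also have "madj V * P * V = dmat d c" unfolding P_def by (rule cj_udv[OF V])
  also have "madj V * X * V = E" unfolding X_def by (rule cj_gen[OF V Ec])
  finally have eq: "dmat d c * E = dmat d c * E * dmat d c" .
  have "(dmat d c * E) $$ (i0,i1) = 1" using Ec i0 i1 unfolding c_def E_def by (simp add: dmat_mult_idx del: mult_idx)
  moreover have "(dmat d c * E * dmat d c) $$ (i0,i1) = 0"
    using Ec i0 i1 mult_carrier_sq[OF dmat_carrier Ec] unfolding c_def by (simp add: mult_dmat_idx del: mult_idx)
  ultimately show False using eq by simp
qed



lemma dmat_add: "dmat n (\<lambda>p. a p + b p) = dmat n a + dmat n b"
  by (intro eq_matI) auto

lemma comm_from_conj: assumes U: "unitary n U" and X: "X \<in> carrier_mat n n" and e: "U * X * madj U = X"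
  shows "U * X = X * U"
proof -
  note u = unitaryD[OF U]
  have "U * X = U * X * (madj U * U)" using u X by simp
  also have "\<dots> = (U * X * madj U) * U" using u X by (simp add: assoc_mult_mat[of _ n n _ n _ n])
  finally show ?thesis using e by simp
qed

lemma comm_adj: assumes U: "unitary n U" and X: "X \<in> carrier_mat n n" and e: "U * X = X * U"
  shows "madj U * X = X * madj U"
proof -
  note u = unitaryD[OF U]
  note AS = assoc_mult_mat[of _ n n _ n _ n]
  have "madj U * X = madj U * (X * (U * madj U))" using u X by simp
  also have "\<dots> = madj U * ((X * U) * madj U)" using u X by (simp add: AS)
  also have "\<dots> = madj U * ((U * X) * madj U)" using e by simp
  also have "\<dots> = madj U * (U * (X * madj U))" using u X by (simp add: AS)
  also have "\<dots> = X * madj U" by (rule cancel_l[OF u(2) u(1) mult_carrier_sq[OF X u(2)] u(3)])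
  finally show ?thesis .
qed

lemma add_cancel_mat: fixes A B C :: "complex mat" assumes "A \<in> carrier_mat n m" "B \<in> carrier_mat n m" "C \<in> carrier_mat n m" "A + C = B + C"
  shows "A = B"
proof (rule eq_matI)
  fix i j assume "i < dim_row B" "j < dim_col B"
  have ij: "i < n" "j < m" using assms \<open>i < dim_row B\<close> \<open>j < dim_col B\<close> by auto
  have "(A + C) $$ (i,j) = (B + C) $$ (i,j)" using assms(4) by simp
  then show "A $$ (i,j) = B $$ (i,j)" using assms(1-3) ij by simp
qed (use assms in auto)

lemma comm_lemma:
  assumes dS: "dS > 0" and dE: "dE > 0" and H: "self_adjoint dE H" and U: "unitary (dS * dE) U"
    and Vb: "unitary dS Vb" and B: "B = Vb * dmat dS (\<lambda>i. complex_of_real (b i)) * madj Vb"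
    and bnn: "\<And>i. i < dS \<Longrightarrow> b i \<ge> 0" and beta: "\<beta> > 0"
    and NE: "U * kron B (gibbs \<beta> H) * madj U = kron B (gibbs \<beta> H)"
  shows "U * kron (Vb * dmat dS (\<lambda>i. if b i = 0 then 1 else 0) * madj Vb) (1\<^sub>m dE)
       = kron (Vb * dmat dS (\<lambda>i. if b i = 0 then 1 else 0) * madj Vb) (1\<^sub>m dE) * U"
    and "(\<forall>i<dS. b i \<noteq> 0) \<Longrightarrow>
       U * (kron (Vb * dmat dS (\<lambda>i. complex_of_real (- ln (b i) / \<beta>)) * madj Vb) (1\<^sub>m dE) + kron (1\<^sub>m dS) H)
     = (kron (Vb * dmat dS (\<lambda>i. complex_of_real (- ln (b i) / \<beta>)) * madj Vb) (1\<^sub>m dE) + kron (1\<^sub>m dS) H) * U"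
proof -
  obtain W lam Z where W: "unitary dE W" and HW: "H = W * dmat dE (\<lambda>i. complex_of_real (lam i)) * madj W"
    and Z: "Z > 0" and G: "gibbs \<beta> H = W * dmat dE (\<lambda>i. complex_of_real (exp (- \<beta> * lam i) / Z)) * madj W"
    using gibbs_diag[OF H dE, of \<beta>] by blast
  note vb = unitaryD[OF Vb] and w = unitaryD[OF W] and u = unitaryD[OF U]
  define N where "N = dS * dE"
  define Q where "Q = kron Vb W"
  have Q: "unitary N Q" unfolding Q_def N_def by (rule unitary_kron[OF Vb W])
  note q = unitaryD[OF Q]
  define g where "g k = exp (- \<beta> * lam k) / Z" for k
  have gpos: "\<And>k. g k > 0" unfolding g_def using Z by simp
  define d where "d p = complex_of_real (b (p div dE)) * complex_of_real (g (p mod dE))" for p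
  have X: "kron B (gibbs \<beta> H) = Q * dmat N d * madj Q"
    unfolding B G Q_def N_def d_def g_def by (rule kron_udv[OF vb(1) w(1)])
  have Xc: "kron B (gibbs \<beta> H) \<in> carrier_mat N N" unfolding X using q by simp
  have UX: "U * (Q * dmat N d * madj Q) = (Q * dmat N d * madj Q) * U"
    using comm_from_conj[OF U[folded N_def] Xc NE[folded N_def]] unfolding X .
  have Uc: "U \<in> carrier_mat N N" using u unfolding N_def by simp
  define c where "c i = (if b i = 0 then 1 else 0 :: complex)" for i
  define F1 where "F1 p = c (p div dE) * 1" for p
  have "U * (Q * dmat N F1 * madj Q) = (Q * dmat N F1 * madj Q) * U"
  proof (rule comm_diag[OF Q Uc UX])
    fix p r assume p: "p < N" and r: "r < N" and e: "d p = d r"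
    have "d p = 0 \<longleftrightarrow> b (p div dE) = 0" "d r = 0 \<longleftrightarrow> b (r div dE) = 0"
      unfolding d_def using gpos by (auto simp: less_le)
    then show "F1 p = F1 r" unfolding F1_def c_def using e by auto
  qed
  moreover have "Q * dmat N F1 * madj Q = kron (Vb * dmat dS c * madj Vb) (1\<^sub>m dE)"
    using kron_udv[OF vb(1) w(1), of c "\<lambda>_. 1", symmetric] udv_one[OF W] unfolding Q_def N_def F1_def by simp
  ultimately show "U * kron (Vb * dmat dS (\<lambda>i. if b i = 0 then 1 else 0) * madj Vb) (1\<^sub>m dE)
       = kron (Vb * dmat dS (\<lambda>i. if b i = 0 then 1 else 0) * madj Vb) (1\<^sub>m dE) * U"
    unfolding c_def by simp
  assume bpos0: "\<forall>i<dS. b i \<noteq> 0"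
  then have bpos: "\<And>i. i < dS \<Longrightarrow> b i > 0" using bnn by (simp add: less_le)
  define kl where "kl i = complex_of_real (- ln (b i) / \<beta>)" for i
  define hl where "hl k = complex_of_real (lam k + ln Z / \<beta>)" for k
  define F2 where "F2 p = kl (p div dE) * 1 + 1 * hl (p mod dE)" for p
  have F2d: "\<And>p. p < N \<Longrightarrow> F2 p = complex_of_real (- ln (Re (d p)) / \<beta>)"
  proof -
    fix p assume p: "p < N"
    have bp: "b (p div dE) > 0" using bpos div_lt[OF p[unfolded N_def]] by simp
    have "Re (d p) = b (p div dE) * (exp (- \<beta> * lam (p mod dE)) / Z)" unfolding d_def g_def by simp
    then have e: "ln (Re (d p)) = ln (b (p div dE)) + (- \<beta> * lam (p mod dE)) - ln Z"
      using bp Z by (simp add: ln_mult ln_div)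
    have "- ln (Re (d p)) / \<beta> = - ln (b (p div dE)) / \<beta> + (lam (p mod dE) + ln Z / \<beta>)"
      unfolding e using beta by (simp add: field_simps)
    then show "F2 p = complex_of_real (- ln (Re (d p)) / \<beta>)" unfolding F2_def kl_def hl_def by simp
  qed
  have "U * (Q * dmat N F2 * madj Q) = (Q * dmat N F2 * madj Q) * U"
    by (rule comm_diag[OF Q Uc UX]) (simp add: F2d)
  moreover have "Q * dmat N F2 * madj Q = Q * dmat N (\<lambda>p. kl (p div dE) * 1) * madj Q + Q * dmat N (\<lambda>p. 1 * hl (p mod dE)) * madj Q"
    unfolding udv_add[OF q(1)] F2_def ..
  moreover have "Q * dmat N (\<lambda>p. kl (p div dE) * 1) * madj Q = kron (Vb * dmat dS kl * madj Vb) (1\<^sub>m dE)"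
    using kron_udv[OF vb(1) w(1), of kl "\<lambda>_. 1", symmetric] udv_one[OF W] unfolding Q_def N_def by simp
  moreover have "Q * dmat N (\<lambda>p. 1 * hl (p mod dE)) * madj Q = kron (1\<^sub>m dS) (W * dmat dE hl * madj W)"
    using kron_udv[OF vb(1) w(1), of "\<lambda>_. 1" hl, symmetric] udv_one[OF Vb] unfolding Q_def N_def by simp
  moreover have "W * dmat dE hl * madj W = H + complex_of_real (ln Z / \<beta>) \<cdot>\<^sub>m 1\<^sub>m dE"
  proof -
    have "W * dmat dE hl * madj W = W * dmat dE (\<lambda>i. complex_of_real (lam i)) * madj W + W * dmat dE (\<lambda>i. complex_of_real (ln Z / \<beta>) * 1) * madj W"
      unfolding udv_add[OF w(1)] hl_def by simp
    also have "W * dmat dE (\<lambda>i. complex_of_real (ln Z / \<beta>) * 1) * madj W = complex_of_real (ln Z / \<beta>) \<cdot>\<^sub>m 1\<^sub>m dE"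
      unfolding udv_smult[OF w(1), symmetric] udv_one[OF W] ..
    finally show ?thesis unfolding HW .
  qed
  ultimately have cm: "U * (kron (Vb * dmat dS kl * madj Vb) (1\<^sub>m dE) + kron (1\<^sub>m dS) (H + complex_of_real (ln Z / \<beta>) \<cdot>\<^sub>m 1\<^sub>m dE))
     = (kron (Vb * dmat dS kl * madj Vb) (1\<^sub>m dE) + kron (1\<^sub>m dS) (H + complex_of_real (ln Z / \<beta>) \<cdot>\<^sub>m 1\<^sub>m dE)) * U"
    by simp
  define K where "K = Vb * dmat dS kl * madj Vb"
  have Kc: "K \<in> carrier_mat dS dS" unfolding K_def using vb by simp
  have Hc: "H \<in> carrier_mat dE dE" using H unfolding self_adjoint_def by simp
  define Y where "Y = kron K (1\<^sub>m dE) + kron (1\<^sub>m dS) H"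
  have Yc: "Y \<in> carrier_mat N N" unfolding Y_def N_def using Kc Hc by simp
  define cc where "cc = complex_of_real (ln Z / \<beta>)"
  have kk: "kron (1\<^sub>m dS) (H + cc \<cdot>\<^sub>m 1\<^sub>m dE) = kron (1\<^sub>m dS) H + cc \<cdot>\<^sub>m 1\<^sub>m N"
    unfolding N_def using Hc by (simp add: kron_add_right kron_smult_right kron_one)
  have "U * (Y + cc \<cdot>\<^sub>m 1\<^sub>m N) = (Y + cc \<cdot>\<^sub>m 1\<^sub>m N) * U"
  proof -
    have k1: "kron K (1\<^sub>m dE) \<in> carrier_mat N N" "kron (1\<^sub>m dS) H \<in> carrier_mat N N" "cc \<cdot>\<^sub>m 1\<^sub>m N \<in> carrier_mat N N"
      using Kc Hc unfolding N_def by auto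
    show ?thesis using cm unfolding kk K_def[symmetric] cc_def[symmetric] Y_def assoc_add_mat[OF k1] .
  qed
  then have sumeq: "U * Y + cc \<cdot>\<^sub>m U = Y * U + cc \<cdot>\<^sub>m U"
    using Uc Yc by (simp add: mult_add_distrib_mat[of _ N N _ N] add_mult_distrib_mat[of _ N N _ _ N] mult_smult_distrib[of _ N N _ N] mult_smult_assoc_mat[of _ N N _ N])
  have "U * Y = Y * U" by (rule add_cancel_mat[of "U * Y" N N "Y * U" "cc \<cdot>\<^sub>m U"]) (use Uc Yc sumeq in auto)
  then show "U * (kron (Vb * dmat dS (\<lambda>i. complex_of_real (- ln (b i) / \<beta>)) * madj Vb) (1\<^sub>m dE) + kron (1\<^sub>m dS) H)
     = (kron (Vb * dmat dS (\<lambda>i. complex_of_real (- ln (b i) / \<beta>)) * madj Vb) (1\<^sub>m dE) + kron (1\<^sub>m dS) H) * U"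
    unfolding Y_def K_def kl_def .
qed



lemma ptrace_pres:
  assumes U: "unitary (a*e) U" and P: "P \<in> carrier_mat a a" and \<sigma>: "\<sigma> \<in> carrier_mat e e"
    and Y: "Y \<in> carrier_mat a a" and YP: "Y * P = 0\<^sub>m a a"
    and c: "U * kron P (1\<^sub>m e) = kron P (1\<^sub>m e) * U"
  shows "ptrace2 a e (U * kron Y \<sigma> * madj U) * P = 0\<^sub>m a a"
proof -
  note u = unitaryD[OF U]
  define N where "N = a * e"
  note AS = assoc_mult_mat[of _ N N _ N _ N]
  have Pt: "kron P (1\<^sub>m e) \<in> carrier_mat N N" unfolding N_def using P by simp
  have Yt: "kron Y \<sigma> \<in> carrier_mat N N" unfolding N_def using Y \<sigma> by simp
  have uN: "U \<in> carrier_mat N N" "madj U \<in> carrier_mat N N" using u unfolding N_def by auto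
  have ca: "madj U * kron P (1\<^sub>m e) = kron P (1\<^sub>m e) * madj U"
    by (rule comm_adj[OF U Pt[unfolded N_def] c])
  have Z: "U * kron Y \<sigma> * madj U \<in> carrier_mat (a*e) (a*e)" using uN Yt unfolding N_def by simp
  have "ptrace2 a e (U * kron Y \<sigma> * madj U) * P = ptrace2 a e (U * kron Y \<sigma> * madj U * kron P (1\<^sub>m e))"
    by (rule ptrace2_mult_right[OF Z P, symmetric])
  also have "U * kron Y \<sigma> * madj U * kron P (1\<^sub>m e) = U * (kron Y \<sigma> * (madj U * kron P (1\<^sub>m e)))"
    using uN Yt Pt by (simp add: AS)
  also have "\<dots> = U * ((kron Y \<sigma> * kron P (1\<^sub>m e)) * madj U)"
    unfolding ca using uN Yt Pt by (simp add: AS)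
  also have "kron Y \<sigma> * kron P (1\<^sub>m e) = kron (Y * P) (\<sigma> * 1\<^sub>m e)"
    by (rule kron_mult[OF Y P \<sigma> one_carrier_mat])
  also have "\<dots> = 0\<^sub>m N N" unfolding YP N_def using \<sigma> by (simp add: kron_zero_left)
  also have "U * (0\<^sub>m N N * madj U) = 0\<^sub>m (a*e) (a*e)" using uN unfolding N_def by simp
  finally show ?thesis by (simp add: ptrace2_zero)
qed

lemma Lj_carrier: "Lj dS dE HS HE V \<tau> \<beta> \<zeta> j \<rho> \<in> carrier_mat dS dS"
  unfolding Lj_def Let_def by simp

lemma Ljdual_carrier: "Ljdual dS dE HS HE V \<tau> \<beta> \<zeta> j X \<in> carrier_mat dS dS"
  unfolding Ljdual_def Let_def by simp

lemma rhoE_carrier: "self_adjoint (dE j) (HE j) \<Longrightarrow> rhoE HE \<beta> \<zeta> j \<in> carrier_mat (dE j) (dE j)"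
  unfolding rhoE_def by (rule gibbs_carrier)

lemma rhoE_trace: "self_adjoint (dE j) (HE j) \<Longrightarrow> dE j > 0 \<Longrightarrow> mtrace (rhoE HE \<beta> \<zeta> j) = 1"
  unfolding rhoE_def by (rule gibbs_trace)

lemma Lsharp_pres:
  assumes M: "M > 0" and P: "P \<in> carrier_mat dS dS"
    and Uu: "\<And>j. j < M \<Longrightarrow> unitary (dS * dE j) (Uop dS dE HS HE V \<tau> j)"
    and cP: "\<And>j. j < M \<Longrightarrow> Uop dS dE HS HE V \<tau> j * kron P (1\<^sub>m (dE j)) = kron P (1\<^sub>m (dE j)) * Uop dS dE HS HE V \<tau> j"
    and HE: "\<And>j. j < M \<Longrightarrow> self_adjoint (dE j) (HE j)"
    and Y: "Y \<in> carrier_mat dS dS" and YP: "Y * P = 0\<^sub>m dS dS"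
  shows "Lsharp s M dS dE HS HE V \<tau> \<beta> \<zeta> Y * P = 0\<^sub>m dS dS"
proof -
  have Lp: "\<And>j Y. j < M \<Longrightarrow> Y \<in> carrier_mat dS dS \<Longrightarrow> Y * P = 0\<^sub>m dS dS \<Longrightarrow> Lj dS dE HS HE V \<tau> \<beta> \<zeta> j Y * P = 0\<^sub>m dS dS"
  proof -
    fix j Y assume j: "j < M" and Y: "Y \<in> carrier_mat dS dS" and YP: "Y * P = 0\<^sub>m dS dS"
    show "Lj dS dE HS HE V \<tau> \<beta> \<zeta> j Y * P = 0\<^sub>m dS dS"
      unfolding Lj_def Let_def by (rule ptrace_pres[OF Uu[OF j] P rhoE_carrier[of dE j HE, OF HE[OF j]] Y YP cP[OF j]])
  qed
  show ?thesis
  proof (cases s)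
    case Cy
    have "\<forall>Y. (\<forall>j\<in>set xs. j < M) \<longrightarrow> Y \<in> carrier_mat dS dS \<longrightarrow> Y * P = 0\<^sub>m dS dS \<longrightarrow>
        fold (\<lambda>j r. Lj dS dE HS HE V \<tau> \<beta> \<zeta> j r) xs Y * P = 0\<^sub>m dS dS" for xs
    proof (induction xs)
      case Nil then show ?case by simp
    next
      case (Cons x xs)
      show ?case using Cons.IH Lp Lj_carrier by simp
    qed
    then show ?thesis using Cy Y YP unfolding Lsharp_def by simp
  next
    case Ra
    have "(\<forall>j\<in>set xs. j < M) \<longrightarrow> foldr (\<lambda>j A. Lj dS dE HS HE V \<tau> \<beta> \<zeta> j Y + A) xs (0\<^sub>m dS dS) \<in> carrier_mat dS dS \<and>
        foldr (\<lambda>j A. Lj dS dE HS HE V \<tau> \<beta> \<zeta> j Y + A) xs (0\<^sub>m dS dS) * P = 0\<^sub>m dS dS" for xs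
    proof (induction xs)
      case Nil then show ?case using P by simp
    next
      case (Cons x xs)
      show ?case
      proof
        assume a: "\<forall>j\<in>set (x # xs). j < M"
        have c1: "Lj dS dE HS HE V \<tau> \<beta> \<zeta> x Y \<in> carrier_mat dS dS" by (rule Lj_carrier)
        have 1: "Lj dS dE HS HE V \<tau> \<beta> \<zeta> x Y * P = 0\<^sub>m dS dS" using Lp[OF _ Y YP] a by simp
        from Cons.IH a have 2: "foldr (\<lambda>j A. Lj dS dE HS HE V \<tau> \<beta> \<zeta> j Y + A) xs (0\<^sub>m dS dS) \<in> carrier_mat dS dS"
          "foldr (\<lambda>j A. Lj dS dE HS HE V \<tau> \<beta> \<zeta> j Y + A) xs (0\<^sub>m dS dS) * P = 0\<^sub>m dS dS" by auto
        show "foldr (\<lambda>j A. Lj dS dE HS HE V \<tau> \<beta> \<zeta> j Y + A) (x # xs) (0\<^sub>m dS dS) \<in> carrier_mat dS dS \<and>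
          foldr (\<lambda>j A. Lj dS dE HS HE V \<tau> \<beta> \<zeta> j Y + A) (x # xs) (0\<^sub>m dS dS) * P = 0\<^sub>m dS dS"
          using c1 1 2 P by (simp add: add_mult_distrib_mat[of _ dS dS _ _ dS])
      qed
    qed
    then have "foldr (\<lambda>j A. Lj dS dE HS HE V \<tau> \<beta> \<zeta> j Y + A) [0..<M] (0\<^sub>m dS dS) \<in> carrier_mat dS dS"
      "foldr (\<lambda>j A. Lj dS dE HS HE V \<tau> \<beta> \<zeta> j Y + A) [0..<M] (0\<^sub>m dS dS) * P = 0\<^sub>m dS dS" by auto
    then show ?thesis using Ra P unfolding Lsharp_def by (simp add: mult_smult_assoc_mat[of _ dS dS _ dS])
  qed
qed

lemma duality:
  assumes U: "U \<in> carrier_mat (a*e) (a*e)" and \<sigma>: "\<sigma> \<in> carrier_mat e e" and R: "R \<in> carrier_mat a a" and X: "X \<in> carrier_mat a a"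
  shows "mtrace (R * ptrace2 a e (kron (1\<^sub>m a) \<sigma> * (madj U * kron X (1\<^sub>m e) * U)))
       = mtrace (ptrace2 a e (U * kron R \<sigma> * madj U) * X)"
proof -
  define N where "N = a * e"
  note AS = assoc_mult_mat[of _ N N _ N _ N]
  have c: "U \<in> carrier_mat N N" "madj U \<in> carrier_mat N N" "kron X (1\<^sub>m e) \<in> carrier_mat N N"
    "kron (1\<^sub>m a) \<sigma> \<in> carrier_mat N N" "kron R \<sigma> \<in> carrier_mat N N" "kron R (1\<^sub>m e) \<in> carrier_mat N N"
    using U \<sigma> R X unfolding N_def by auto
  have kk: "kron R (1\<^sub>m e) * kron (1\<^sub>m a) \<sigma> = kron R \<sigma>"
    using kron_mult[OF R one_carrier_mat one_carrier_mat \<sigma>] R \<sigma> by simp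
  have W1: "kron (1\<^sub>m a) \<sigma> * (madj U * kron X (1\<^sub>m e) * U) \<in> carrier_mat (a*e) (a*e)" using c unfolding N_def by simp
  have W2: "U * kron R \<sigma> * madj U \<in> carrier_mat (a*e) (a*e)" using c unfolding N_def by simp
  have "mtrace (R * ptrace2 a e (kron (1\<^sub>m a) \<sigma> * (madj U * kron X (1\<^sub>m e) * U)))
      = mtrace (kron R (1\<^sub>m e) * (kron (1\<^sub>m a) \<sigma> * (madj U * kron X (1\<^sub>m e) * U)))"
    by (rule mtrace_ptrace2_left[OF W1 R])
  also have "\<dots> = mtrace ((kron R (1\<^sub>m e) * kron (1\<^sub>m a) \<sigma>) * (madj U * (kron X (1\<^sub>m e) * U)))"
    using c by (simp add: AS)
  also have "\<dots> = mtrace (kron R \<sigma> * (madj U * (kron X (1\<^sub>m e) * U)))" unfolding kk ..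
  also have "\<dots> = mtrace (U * (kron R \<sigma> * (madj U * kron X (1\<^sub>m e))))"
  proof -
    have "mtrace ((kron R \<sigma> * (madj U * kron X (1\<^sub>m e))) * U) = mtrace (U * (kron R \<sigma> * (madj U * kron X (1\<^sub>m e))))"
      by (rule mtrace_comm[of _ N N]) (use c in simp)+
    then show ?thesis using c by (simp add: AS)
  qed
  also have "\<dots> = mtrace (U * kron R \<sigma> * madj U * kron X (1\<^sub>m e))" using c by (simp add: AS)
  also have "\<dots> = mtrace (ptrace2 a e (U * kron R \<sigma> * madj U) * X)"
    by (rule mtrace_ptrace2_right[OF W2 X, symmetric])
  finally show ?thesis .
qed

lemma Phi_core:
  assumes U: "unitary (a*e) U" and K: "K \<in> carrier_mat a a" and H: "H \<in> carrier_mat e e"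
    and \<sigma>: "\<sigma> \<in> carrier_mat e e" and tr: "mtrace \<sigma> = 1"
    and cE: "U * (kron K (1\<^sub>m e) + kron (1\<^sub>m a) H) = (kron K (1\<^sub>m e) + kron (1\<^sub>m a) H) * U"
  shows "ptrace2 a e (kron (1\<^sub>m a) \<sigma> * (madj U * kron (1\<^sub>m a) H * U - kron (1\<^sub>m a) H))
    = K - ptrace2 a e (kron (1\<^sub>m a) \<sigma> * (madj U * kron K (1\<^sub>m e) * U))"
proof -
  note u = unitaryD[OF U]
  define N where "N = a * e"
  note AS = assoc_mult_mat[of _ N N _ N _ N]
  define Kt where "Kt = kron K (1\<^sub>m e)"
  define Ht where "Ht = kron (1\<^sub>m a) H"
  define S where "S = kron (1\<^sub>m a) \<sigma>"
  have c: "U \<in> carrier_mat N N" "madj U \<in> carrier_mat N N" "Kt \<in> carrier_mat N N" "Ht \<in> carrier_mat N N" "S \<in> carrier_mat N N"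
    using u K H \<sigma> unfolding N_def Kt_def Ht_def S_def by auto
  have E: "madj U * (Kt + Ht) * U = Kt + Ht"
  proof -
    have "madj U * (Kt + Ht) * U = madj U * ((Kt + Ht) * U)" using c by (simp add: AS)
    also have "\<dots> = madj U * (U * (Kt + Ht))" using cE unfolding Kt_def Ht_def by simp
    also have "\<dots> = Kt + Ht" by (rule cancel_l[OF c(2) c(1) add_carrier_mat[OF c(4), of Kt] u(3)[folded N_def]])
    finally show ?thesis .
  qed
  have "madj U * (Kt + Ht) * U = madj U * Kt * U + madj U * Ht * U"
    using c by (simp add: mult_add_distrib_mat[of _ N N _ N] add_mult_distrib_mat[of _ N N _ _ N] del: assoc_mult_mat)
  then have sumeq: "madj U * Kt * U + madj U * Ht * U = Kt + Ht" using E by simp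
  have diff: "madj U * Ht * U - Ht = Kt - madj U * Kt * U"
  proof (rule eq_matI)
    fix i j assume "i < dim_row (Kt - madj U * Kt * U)" "j < dim_col (Kt - madj U * Kt * U)"
    then have i: "i < N" and j: "j < N" using c by auto
    have "(madj U * Kt * U + madj U * Ht * U) $$ (i,j) = (Kt + Ht) $$ (i,j)" using sumeq by simp
    then have "(madj U * Kt * U) $$ (i,j) + (madj U * Ht * U) $$ (i,j) = Kt $$ (i,j) + Ht $$ (i,j)"
      using c i j by (simp del: mult_idx assoc_mult_mat)
    then show "(madj U * Ht * U - Ht) $$ (i,j) = (Kt - madj U * Kt * U) $$ (i,j)"
      using c i j by (simp del: mult_idx assoc_mult_mat add: algebra_simps)
  qed (use c in auto)
  have "ptrace2 a e (S * (madj U * Ht * U - Ht)) = ptrace2 a e (S * Kt - S * (madj U * Kt * U))"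
    unfolding diff using c by (simp add: mult_minus_distrib_mat[of _ N N _ N] del: assoc_mult_mat)
  also have "\<dots> = ptrace2 a e (S * Kt) - ptrace2 a e (S * (madj U * Kt * U))"
    by (rule ptrace2_minus) (use c in \<open>simp_all add: N_def\<close>)
  also have "S * Kt = kron K \<sigma>" unfolding S_def Kt_def using kron_mult[OF one_carrier_mat K \<sigma> one_carrier_mat] K \<sigma> by simp
  also have "ptrace2 a e (kron K \<sigma>) = K"
  proof -
    have "1 \<cdot>\<^sub>m K = K" by (intro eq_matI) auto
    then show ?thesis using ptrace2_kron[OF K \<sigma>] tr by simp
  qed
  finally show ?thesis unfolding S_def Kt_def Ht_def .
qed



lemma foldr_sum_trace:
  assumes "\<And>j. j \<in> set xs \<Longrightarrow> f j \<in> carrier_mat a a" and K: "K \<in> carrier_mat a a"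
  shows "foldr (\<lambda>j A. f j + A) xs (0\<^sub>m a a) \<in> carrier_mat a a \<and>
    mtrace (foldr (\<lambda>j A. f j + A) xs (0\<^sub>m a a) * K) = (\<Sum>j\<leftarrow>xs. mtrace (f j * K))"
  using assms(1)
proof (induction xs)
  case Nil then show ?case using K by simp
next
  case (Cons x xs)
  have fx: "f x \<in> carrier_mat a a" using Cons.prems by simp
  have IH: "foldr (\<lambda>j A. f j + A) xs (0\<^sub>m a a) \<in> carrier_mat a a"
    "mtrace (foldr (\<lambda>j A. f j + A) xs (0\<^sub>m a a) * K) = (\<Sum>j\<leftarrow>xs. mtrace (f j * K))"
    using Cons by auto
  have "(f x + foldr (\<lambda>j A. f j + A) xs (0\<^sub>m a a)) * K = f x * K + foldr (\<lambda>j A. f j + A) xs (0\<^sub>m a a) * K"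
    using fx IH(1) K by (simp add: add_mult_distrib_mat[of _ a a _ _ a])
  then show ?case using fx IH K by (simp add: mtrace_add[of _ a])
qed

lemma sum_aux: "(\<Sum>j<M. (c::complex) * (x - y j)) = c * (of_nat M * x - (\<Sum>j<M. y j))"
proof -
  have "(\<Sum>j<M. c * (x - y j)) = c * (\<Sum>j<M. x - y j)" by (rule sum_distrib_left[symmetric])
  then show ?thesis by (simp add: sum_subtractf)
qed

lemma sum_list_upt_lessThan: "(\<Sum>j\<leftarrow>[0..<M]. g j) = (\<Sum>j<M. g j)"
  by (simp add: sum_set_upt_conv_sum_list_nat[symmetric] atLeast0LessThan)

theorem mainTheorem14:
  fixes s :: scheme and M dS :: nat and dE :: "nat \<Rightarrow> nat"
    and HS :: "complex mat" and HE V :: "nat \<Rightarrow> complex mat"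
    and \<tau> :: "nat \<Rightarrow> real" and \<beta> :: real and \<zeta> :: "nat \<Rightarrow> real"
    and \<rho>plus :: "complex mat"
  assumes M: "M > 0" and dS: "dS > 0" and dE: "\<And>j. j < M \<Longrightarrow> dE j > 0"
    and HS: "self_adjoint dS HS"
    and HE: "\<And>j. j < M \<Longrightarrow> self_adjoint (dE j) (HE j)"
    and V: "\<And>j. j < M \<Longrightarrow> self_adjoint (dS * dE j) (V j)"
    and tau: "\<And>j. j < M \<Longrightarrow> \<tau> j > 0"
    and beta: "\<beta> > 0"
    and ER: "\<exists>\<zeta>'. primitive dS (Lsharp s M dS dE HS HE V \<tau> \<beta> \<zeta>')"
    and NE: "\<exists>\<rho>0 :: real \<Rightarrow> complex mat. \<forall>z::real. is_state dS (\<rho>0 z) \<and>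
              (\<forall>j<M. let U = Uop dS dE HS HE V \<tau> j;
                         R = kron (\<rho>0 z) (gibbs (\<beta> - z) (HE j))
                     in U * R * madj U = R)"
    and inv: "is_state dS \<rho>plus" "Lsharp s M dS dE HS HE V \<tau> \<beta> \<zeta> \<rho>plus = \<rho>plus"
    and uniq: "\<And>\<sigma>. is_state dS \<sigma> \<Longrightarrow> Lsharp s M dS dE HS HE V \<tau> \<beta> \<zeta> \<sigma> = \<sigma> \<Longrightarrow> \<sigma> = \<rho>plus"
  shows "(\<Sum>j<M. mtrace (\<rho>plus * Phisharp s M dS dE HS HE V \<tau> \<beta> \<zeta> j)) = 0"
proof -
  from NE obtain \<rho>0 :: "real \<Rightarrow> complex mat" where ne: "\<forall>z::real. is_state dS (\<rho>0 z) \<and>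
              (\<forall>j<M. let U = Uop dS dE HS HE V \<tau> j;
                         R = kron (\<rho>0 z) (gibbs (\<beta> - z) (HE j))
                     in U * R * madj U = R)" by blast
  define B where "B = \<rho>0 0"
  have stB: "is_state dS B" using ne unfolding B_def by blast
  have saB: "self_adjoint dS B" using stB unfolding is_state_def by simp
  obtain Vb b where Vb: "unitary dS Vb" and Bd: "B = Vb * dmat dS (\<lambda>i. complex_of_real (b i)) * madj Vb"
    using spectral[OF saB] by blast
  note vb = unitaryD[OF Vb]
  have bnn: "\<And>i. i < dS \<Longrightarrow> b i \<ge> 0" using psd_diag_nonneg[OF stB Vb Bd] by blast
  have HEc: "\<And>j. j < M \<Longrightarrow> HE j \<in> carrier_mat (dE j) (dE j)" using HE unfolding self_adjoint_def by blast
  define U where "U j = Uop dS dE HS HE V \<tau> j" for j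
  have Uu: "\<And>j. j < M \<Longrightarrow> unitary (dS * dE j) (U j)"
  proof -
    fix j assume j: "j < M"
    have "self_adjoint (dS * dE j) (kron HS (1\<^sub>m (dE j)) + kron (1\<^sub>m dS) (HE j) + V j)"
      by (intro sa_add sa_kron HS sa_one HE[OF j] V[OF j])
    then show "unitary (dS * dE j) (U j)" unfolding U_def Uop_def by (rule unitary_mexp)
  qed
  have NEj: "\<And>j. j < M \<Longrightarrow> U j * kron B (gibbs \<beta> (HE j)) * madj (U j) = kron B (gibbs \<beta> (HE j))"
  proof -
    fix j assume j: "j < M"
    have "\<forall>j<M. let U = Uop dS dE HS HE V \<tau> j; R = kron (\<rho>0 0) (gibbs (\<beta> - 0) (HE j)) in U * R * madj U = R"
      using ne by blast
    then show "U j * kron B (gibbs \<beta> (HE j)) * madj (U j) = kron B (gibbs \<beta> (HE j))"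
      using j unfolding U_def B_def Let_def by simp
  qed
  define c where "c = (\<lambda>i. if b i = 0 then 1 else 0 :: complex)"
  define P where "P = Vb * dmat dS c * madj Vb"
  have Pc: "P \<in> carrier_mat dS dS" unfolding P_def using vb by simp
  have cP: "\<And>j. j < M \<Longrightarrow> U j * kron P (1\<^sub>m (dE j)) = kron P (1\<^sub>m (dE j)) * U j"
  proof -
    fix j assume j: "j < M"
    show "U j * kron P (1\<^sub>m (dE j)) = kron P (1\<^sub>m (dE j)) * U j"
      unfolding P_def c_def by (rule comm_lemma(1)[OF dS dE[OF j] HE[OF j] Uu[OF j] Vb Bd bnn beta NEj[OF j]])
  qed
  obtain \<zeta>' where prim: "primitive dS (Lsharp s M dS dE HS HE V \<tau> \<beta> \<zeta>')" using ER by blast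
  have bpos: "\<forall>i<dS. b i \<noteq> 0"
  proof (rule faithful[OF prim stB Vb Bd c_def])
    fix Y assume Y: "Y \<in> carrier_mat dS dS" and YP: "Y * (Vb * dmat dS c * madj Vb) = 0\<^sub>m dS dS"
    show "Lsharp s M dS dE HS HE V \<tau> \<beta> \<zeta>' Y * (Vb * dmat dS c * madj Vb) = 0\<^sub>m dS dS"
      using Lsharp_pres[OF M Pc Uu[unfolded U_def] cP[unfolded U_def] HE Y YP[folded P_def]] unfolding P_def .
  qed
  define K where "K = Vb * dmat dS (\<lambda>i. complex_of_real (- ln (b i) / \<beta>)) * madj Vb"
  have Kc: "K \<in> carrier_mat dS dS" unfolding K_def using vb by simp
  have cE: "\<And>j. j < M \<Longrightarrow> U j * (kron K (1\<^sub>m (dE j)) + kron (1\<^sub>m dS) (HE j)) = (kron K (1\<^sub>m (dE j)) + kron (1\<^sub>m dS) (HE j)) * U j"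
  proof -
    fix j assume j: "j < M"
    show "U j * (kron K (1\<^sub>m (dE j)) + kron (1\<^sub>m dS) (HE j)) = (kron K (1\<^sub>m (dE j)) + kron (1\<^sub>m dS) (HE j)) * U j"
      unfolding K_def by (rule comm_lemma(2)[OF dS dE[OF j] HE[OF j] Uu[OF j] Vb Bd bnn beta NEj[OF j] bpos])
  qed
  define T where "T = (\<Sum>k<M. \<tau> k)"
  have dual: "\<And>j R X. j < M \<Longrightarrow> R \<in> carrier_mat dS dS \<Longrightarrow> X \<in> carrier_mat dS dS \<Longrightarrow>
      mtrace (R * Ljdual dS dE HS HE V \<tau> \<beta> \<zeta> j X) = mtrace (Lj dS dE HS HE V \<tau> \<beta> \<zeta> j R * X)"
  proof -
    fix j and R X :: "complex mat" assume j: "j < M" and R: "R \<in> carrier_mat dS dS" and X: "X \<in> carrier_mat dS dS"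
    have Uc: "U j \<in> carrier_mat (dS * dE j) (dS * dE j)" using unitaryD[OF Uu[OF j]] by simp
    show "mtrace (R * Ljdual dS dE HS HE V \<tau> \<beta> \<zeta> j X) = mtrace (Lj dS dE HS HE V \<tau> \<beta> \<zeta> j R * X)"
      unfolding Ljdual_def Lj_def Let_def U_def[symmetric]
      by (rule duality[OF Uc rhoE_carrier[of dE j HE, OF HE[OF j]] R X])
  qed
  have Phi_eq: "\<And>j. j < M \<Longrightarrow> Phi M dS dE HS HE V \<tau> \<beta> \<zeta> j = (- 1 / complex_of_real T) \<cdot>\<^sub>m (K - Ljdual dS dE HS HE V \<tau> \<beta> \<zeta> j K)"
  proof -
    fix j assume j: "j < M"
    have "ptrace2 dS (dE j) (kron (1\<^sub>m dS) (rhoE HE \<beta> \<zeta> j) * (madj (U j) * kron (1\<^sub>m dS) (HE j) * U j - kron (1\<^sub>m dS) (HE j)))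
      = K - ptrace2 dS (dE j) (kron (1\<^sub>m dS) (rhoE HE \<beta> \<zeta> j) * (madj (U j) * kron K (1\<^sub>m (dE j)) * U j))"
      by (rule Phi_core[OF Uu[OF j] Kc HEc[OF j] rhoE_carrier[of dE j HE, OF HE[OF j]] rhoE_trace[of dE j HE, OF HE[OF j] dE[OF j]] cE[OF j]])
    then show "Phi M dS dE HS HE V \<tau> \<beta> \<zeta> j = (- 1 / complex_of_real T) \<cdot>\<^sub>m (K - Ljdual dS dE HS HE V \<tau> \<beta> \<zeta> j K)"
      unfolding Phi_def Ljdual_def Let_def U_def[symmetric] T_def by simp
  qed
  have Phi_tr: "\<And>j R. j < M \<Longrightarrow> R \<in> carrier_mat dS dS \<Longrightarrow> mtrace (R * Phi M dS dE HS HE V \<tau> \<beta> \<zeta> j)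
      = (- 1 / complex_of_real T) * (mtrace (R * K) - mtrace (Lj dS dE HS HE V \<tau> \<beta> \<zeta> j R * K))"
  proof -
    fix j and R :: "complex mat" assume j: "j < M" and R: "R \<in> carrier_mat dS dS"
    define LK where "LK = Ljdual dS dE HS HE V \<tau> \<beta> \<zeta> j K"
    have LKc: "LK \<in> carrier_mat dS dS" unfolding LK_def by (rule Ljdual_carrier)
    have RP: "R * ((- 1 / complex_of_real T) \<cdot>\<^sub>m (K - LK)) = (- 1 / complex_of_real T) \<cdot>\<^sub>m (R * K - R * LK)"
      unfolding mult_smult_distrib[OF R minus_carrier_mat[OF LKc, of K]] mult_minus_distrib_mat[OF R Kc LKc] ..
    have "mtrace (R * Phi M dS dE HS HE V \<tau> \<beta> \<zeta> j) = (- 1 / complex_of_real T) * (mtrace (R * K) - mtrace (R * LK))"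
    proof -
      have mc: "R * K - R * LK \<in> carrier_mat dS dS" by (rule minus_carrier_mat) (use R LKc in simp)
      show ?thesis unfolding Phi_eq[OF j, folded LK_def] RP
        mtrace_smult[OF mc] mtrace_minus[OF mult_carrier_sq[OF R Kc] mult_carrier_sq[OF R LKc]] ..
    qed
    also have "mtrace (R * LK) = mtrace (Lj dS dE HS HE V \<tau> \<beta> \<zeta> j R * K)" unfolding LK_def by (rule dual[OF j R Kc])
    finally show "mtrace (R * Phi M dS dE HS HE V \<tau> \<beta> \<zeta> j) = (- 1 / complex_of_real T) * (mtrace (R * K) - mtrace (Lj dS dE HS HE V \<tau> \<beta> \<zeta> j R * K))" .
  qed
  have \<rho>c: "\<rho>plus \<in> carrier_mat dS dS" using inv(1) unfolding is_state_def self_adjoint_def by simp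
  show ?thesis
  proof (cases s)
    case Cy
    define G where "G k = fold (\<lambda>j r. Lj dS dE HS HE V \<tau> \<beta> \<zeta> j r) [0..<k] \<rho>plus" for k
    have GS: "\<And>k. G (Suc k) = Lj dS dE HS HE V \<tau> \<beta> \<zeta> k (G k)" unfolding G_def by simp
    have Gc: "\<And>k. G k \<in> carrier_mat dS dS"
    proof -
      fix k show "G k \<in> carrier_mat dS dS" by (cases k) (simp_all add: G_def \<rho>c Lj_carrier)
    qed
    have GM: "G M = \<rho>plus" using inv(2) Cy unfolding Lsharp_def G_def by simp
    have df0: "k \<le> M \<longrightarrow> (\<forall>X \<in> carrier_mat dS dS. mtrace (\<rho>plus * foldr (\<lambda>k X. Ljdual dS dE HS HE V \<tau> \<beta> \<zeta> k X) [0..<k] X) = mtrace (G k * X))" for k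
    proof (induction k)
      case 0 then show ?case by (simp add: G_def)
    next
      case (Suc k)
      show ?case
      proof (intro impI ballI)
        assume kM: "Suc k \<le> M"
        fix X :: "complex mat" assume X: "X \<in> carrier_mat dS dS"
        have IH: "\<forall>X \<in> carrier_mat dS dS. mtrace (\<rho>plus * foldr (\<lambda>k X. Ljdual dS dE HS HE V \<tau> \<beta> \<zeta> k X) [0..<k] X) = mtrace (G k * X)"
          using Suc.IH kM by simp
        have "mtrace (\<rho>plus * foldr (\<lambda>k X. Ljdual dS dE HS HE V \<tau> \<beta> \<zeta> k X) [0..<Suc k] X)
            = mtrace (\<rho>plus * foldr (\<lambda>k X. Ljdual dS dE HS HE V \<tau> \<beta> \<zeta> k X) [0..<k] (Ljdual dS dE HS HE V \<tau> \<beta> \<zeta> k X))"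
          by simp
        also have "\<dots> = mtrace (G k * Ljdual dS dE HS HE V \<tau> \<beta> \<zeta> k X)"
          using IH Ljdual_carrier by blast
        also have "\<dots> = mtrace (G (Suc k) * X)" unfolding GS by (rule dual[OF _ Gc X]) (use kM in simp)
        finally show "mtrace (\<rho>plus * foldr (\<lambda>k X. Ljdual dS dE HS HE V \<tau> \<beta> \<zeta> k X) [0..<Suc k] X) = mtrace (G (Suc k) * X)" .
      qed
    qed
    have df: "\<And>k X. k \<le> M \<Longrightarrow> X \<in> carrier_mat dS dS \<Longrightarrow> mtrace (\<rho>plus * foldr (\<lambda>k X. Ljdual dS dE HS HE V \<tau> \<beta> \<zeta> k X) [0..<k] X) = mtrace (G k * X)"
      using df0 by blast
    have "(\<Sum>j<M. mtrace (\<rho>plus * Phisharp s M dS dE HS HE V \<tau> \<beta> \<zeta> j))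
        = (\<Sum>j<M. (- 1 / complex_of_real T) * (mtrace (G j * K) - mtrace (G (Suc j) * K)))"
    proof (rule sum.cong[OF refl])
      fix j assume "j \<in> {..<M}"
      then have j: "j < M" by simp
      have "mtrace (\<rho>plus * Phisharp s M dS dE HS HE V \<tau> \<beta> \<zeta> j) = mtrace (G j * Phi M dS dE HS HE V \<tau> \<beta> \<zeta> j)"
        unfolding Phisharp_def Cy using df[of j "Phi M dS dE HS HE V \<tau> \<beta> \<zeta> j"] j
        by (simp add: Phi_def Let_def)
      also have "\<dots> = (- 1 / complex_of_real T) * (mtrace (G j * K) - mtrace (G (Suc j) * K))"
        using Phi_tr[OF j Gc] GS by simp
      finally show "mtrace (\<rho>plus * Phisharp s M dS dE HS HE V \<tau> \<beta> \<zeta> j) = (- 1 / complex_of_real T) * (mtrace (G j * K) - mtrace (G (Suc j) * K))" .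
    qed
    also have "\<dots> = (- 1 / complex_of_real T) * (\<Sum>j<M. mtrace (G j * K) - mtrace (G (Suc j) * K))"
      by (simp add: sum_distrib_left)
    also have "(\<Sum>j<M. mtrace (G j * K) - mtrace (G (Suc j) * K)) = mtrace (G 0 * K) - mtrace (G M * K)"
      by (rule sum_lessThan_telescope')
    also have "\<dots> = 0" using GM by (simp add: G_def)
    finally show ?thesis by simp
  next
    case Ra
    define S where "S = foldr (\<lambda>j A. Lj dS dE HS HE V \<tau> \<beta> \<zeta> j \<rho>plus + A) [0..<M] (0\<^sub>m dS dS)"
    have fs: "S \<in> carrier_mat dS dS \<and> mtrace (S * K) = (\<Sum>j\<leftarrow>[0..<M]. mtrace (Lj dS dE HS HE V \<tau> \<beta> \<zeta> j \<rho>plus * K))"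
      unfolding S_def by (rule foldr_sum_trace[OF Lj_carrier Kc])
    have Sc: "S \<in> carrier_mat dS dS" using fs by simp
    have "(1 / of_nat M) \<cdot>\<^sub>m S = \<rho>plus" using inv(2) Ra unfolding Lsharp_def S_def by simp
    then have "mtrace (\<rho>plus * K) = (1 / of_nat M) * mtrace (S * K)"
      using Sc Kc by (metis mult_carrier_mat mtrace_smult mult_smult_assoc_mat)
    then have SK: "mtrace (S * K) = of_nat M * mtrace (\<rho>plus * K)" using M by (simp add: field_simps)
    have "(\<Sum>j<M. mtrace (\<rho>plus * Phisharp s M dS dE HS HE V \<tau> \<beta> \<zeta> j))
        = (\<Sum>j<M. (- 1 / complex_of_real T) * (mtrace (\<rho>plus * K) - mtrace (Lj dS dE HS HE V \<tau> \<beta> \<zeta> j \<rho>plus * K)))"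
      unfolding Phisharp_def Ra using Phi_tr[OF _ \<rho>c] by simp
    also have "\<dots> = (- 1 / complex_of_real T) * (of_nat M * mtrace (\<rho>plus * K) - (\<Sum>j<M. mtrace (Lj dS dE HS HE V \<tau> \<beta> \<zeta> j \<rho>plus * K)))"
      by (rule sum_aux)
    also have "(\<Sum>j<M. mtrace (Lj dS dE HS HE V \<tau> \<beta> \<zeta> j \<rho>plus * K)) = mtrace (S * K)"
      using fs by (simp add: sum_list_upt_lessThan)
    finally show ?thesis unfolding SK by simp
  qed
qed

end
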